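(* Assume the standing hypotheses below, including $(A_c^+)$, and suppose moreover that $c^-\equiv0$ and that $(P_0)$ has a solution $u_0$ with $c^+u_0\gneqq0$. Then there exists $\bar\lambda\in(0,\infty)$ such that for every $\lambda\ge\bar\lambda$, problem $(P_\lambda)$ has no solution $u$ with $u\ge u_0$ in $\Omega$.
   Context: Standing hypotheses: $\Omega\subset\mathbb R^n$, $n\ge3$, is a bounded domain with boundary of class $C^{1,\mathrm{Dini}}$. $A(x)=(a_{ij}(x))$ is a symmetric matrix with entries in $C^{0,\mathrm{Dini}}(\overline\Omega)$ and $\vartheta I_n\le A(x)\le\vartheta^{-1}I_n$ for some $\vartheta>0$. $M(x)$ is a measurable symmetric matrix with $0<\mu_1I_n\le M(x)\le\mu_2I_n$ in $\Omega$. $c,h\in L^p(\Omega)$ for some $p>n$; $c^+=\max(c,0)$, $c^-=\max(-c,0)$, and $c_\lambda(x):=\lambda c^+(x)-c^-(x)$. Hypothesis $(A_c^+)$: $\Omega_{c^+}:=\operatorname{supp}(c^+)$ has $|\Omega_{c^+}|>0$, and there is $\varepsilon>0$ such that $c^-=0$ a.e. in $\{x\in\Omega: d(x,\Omega_{c^+})<\varepsilon\}$. Problem $(P_\lambda)$: $-\operatorname{div}(A(x)Du)=c_\lambda(x)u+(M(x)Du,Du)+h(x)$, $u\in H_0^1(\Omega)\cap L^\infty(\Omega)$, understood weakly against all $\varphi\in C_0^\infty(\Omega)$. $f\gneqq0$ means $f\ge0$ a.e. and $f\not\equiv0$. *)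

theory Defs
  imports "HOL-Analysis.Analysis"
begin

definition partial_deriv :: "'n::finite \<Rightarrow> (real^'n \<Rightarrow> real) \<Rightarrow> real^'n \<Rightarrow> real" where
  "partial_deriv i f x = frechet_derivative f (at x) (axis i 1)"

definition grad :: "(real^'n::finite \<Rightarrow> real) \<Rightarrow> real^'n \<Rightarrow> real^'n" where
  "grad f x = (\<chi> i. partial_deriv i f x)"

primrec higher_diff :: "nat \<Rightarrow> (real^'n::finite \<Rightarrow> real) \<Rightarrow> bool" where
  "higher_diff 0 f = continuous_on UNIV f"
| "higher_diff (Suc k) f = ((\<forall>x. f differentiable at x) \<and> continuous_on UNIV f
      \<and> (\<forall>i. higher_diff k (partial_deriv i f)))"

definition smooth_fn :: "(real^'n::finite \<Rightarrow> real) \<Rightarrow> bool" where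
  "smooth_fn f \<longleftrightarrow> (\<forall>k. higher_diff k f)"

definition tsupp :: "(real^'n::finite \<Rightarrow> real) \<Rightarrow> (real^'n) set" where
  "tsupp f = closure {x. f x \<noteq> 0}"

definition test_fn :: "(real^'n::finite) set \<Rightarrow> (real^'n \<Rightarrow> real) \<Rightarrow> bool" where
  "test_fn \<Omega> \<phi> \<longleftrightarrow> smooth_fn \<phi> \<and> compact (tsupp \<phi>) \<and> tsupp \<phi> \<subseteq> \<Omega>"

definition modulus :: "('a::metric_space) set \<Rightarrow> ('a \<Rightarrow> 'b::real_normed_vector) \<Rightarrow> real \<Rightarrow> real" where
  "modulus S f t = Sup {norm (f x - f y) | x y. x \<in> S \<and> y \<in> S \<and> dist x y \<le> t}"

definition dini_continuous_on :: "('a::metric_space) set \<Rightarrow> ('a \<Rightarrow> 'b::real_normed_vector) \<Rightarrow> bool" where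
  "dini_continuous_on S f \<longleftrightarrow> continuous_on S f
     \<and> (\<forall>t. bdd_above {norm (f x - f y) | x y. x \<in> S \<and> y \<in> S \<and> dist x y \<le> t})
     \<and> set_integrable lborel {0<..1} (\<lambda>t. modulus S f t / t)"

text \<open>Boundary of class C^{1,Dini}: locally, after choosing a unit direction e, Omega is the
  supergraph {x. x \<bullet> e > gamma(x - (x \<bullet> e) e)} of a C^1 function gamma (on the hyperplane
  orthogonal to e) whose gradient is Dini continuous on bounded sets.\<close>
definition C1_dini_boundary :: "(real^'n::finite) set \<Rightarrow> bool" where
  "C1_dini_boundary \<Omega> \<longleftrightarrow> (\<forall>x0\<in>frontier \<Omega>. \<exists>r>0. \<exists>e \<gamma>. norm e = 1
      \<and> (\<forall>x. \<gamma> differentiable at x)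
      \<and> continuous_on UNIV (grad \<gamma>)
      \<and> (\<forall>R. dini_continuous_on (cball 0 R) (grad \<gamma>))
      \<and> \<Omega> \<inter> ball x0 r = {x \<in> ball x0 r. x \<bullet> e > \<gamma> (x - (x \<bullet> e) *\<^sub>R e)})"

definition Lp :: "real \<Rightarrow> (real^'n::finite) set \<Rightarrow> (real^'n \<Rightarrow> real) \<Rightarrow> bool" where
  "Lp p \<Omega> f \<longleftrightarrow> f \<in> borel_measurable (lebesgue_on \<Omega>)
      \<and> integrable (lebesgue_on \<Omega>) (\<lambda>x. \<bar>f x\<bar> powr p)"

definition Linfty :: "(real^'n::finite) set \<Rightarrow> (real^'n \<Rightarrow> real) \<Rightarrow> bool" where
  "Linfty \<Omega> f \<longleftrightarrow> f \<in> borel_measurable (lebesgue_on \<Omega>)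
      \<and> (\<exists>C. AE x in lebesgue_on \<Omega>. \<bar>f x\<bar> \<le> C)"

text \<open>H01 Omega u g: u belongs to H_0^1(Omega) (closure of C_0^infinity(Omega) in the H^1 norm)
  and g is its (weak) gradient, i.e. the L^2 limit of the gradients of the approximating
  test functions.\<close>
definition H01 :: "(real^'n::finite) set \<Rightarrow> (real^'n \<Rightarrow> real) \<Rightarrow> (real^'n \<Rightarrow> real^'n) \<Rightarrow> bool" where
  "H01 \<Omega> u g \<longleftrightarrow> u \<in> borel_measurable (lebesgue_on \<Omega>)
      \<and> g \<in> borel_measurable (lebesgue_on \<Omega>)
      \<and> integrable (lebesgue_on \<Omega>) (\<lambda>x. (u x)\<^sup>2)
      \<and> integrable (lebesgue_on \<Omega>) (\<lambda>x. (norm (g x))\<^sup>2)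
      \<and> (\<exists>\<phi>. (\<forall>k. test_fn \<Omega> (\<phi> k))
           \<and> (\<lambda>k. integral\<^sup>L (lebesgue_on \<Omega>) (\<lambda>x. (\<phi> k x - u x)\<^sup>2)) \<longlonglongrightarrow> 0
           \<and> (\<lambda>k. integral\<^sup>L (lebesgue_on \<Omega>) (\<lambda>x. (norm (grad (\<phi> k) x - g x))\<^sup>2)) \<longlonglongrightarrow> 0)"

definition pos_part :: "('a \<Rightarrow> real) \<Rightarrow> 'a \<Rightarrow> real" where
  "pos_part c x = max (c x) 0"

definition neg_part :: "('a \<Rightarrow> real) \<Rightarrow> 'a \<Rightarrow> real" where
  "neg_part c x = max (- c x) 0"

definition c_lam :: "real \<Rightarrow> ('a \<Rightarrow> real) \<Rightarrow> 'a \<Rightarrow> real" where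
  "c_lam lam c x = lam * pos_part c x - neg_part c x"

definition is_solution ::
  "(real^'n::finite) set \<Rightarrow> (real^'n \<Rightarrow> real^'n^'n) \<Rightarrow> (real^'n \<Rightarrow> real^'n^'n)
   \<Rightarrow> (real^'n \<Rightarrow> real) \<Rightarrow> (real^'n \<Rightarrow> real) \<Rightarrow> real \<Rightarrow> (real^'n \<Rightarrow> real) \<Rightarrow> bool" where
  "is_solution \<Omega> A M c h lam u \<longleftrightarrow> Linfty \<Omega> u \<and>
     (\<exists>Du. H01 \<Omega> u Du \<and>
        (\<forall>\<phi>. test_fn \<Omega> \<phi> \<longrightarrow>
           integral\<^sup>L (lebesgue_on \<Omega>) (\<lambda>x. (A x *v Du x) \<bullet> grad \<phi> x)
         = integral\<^sup>L (lebesgue_on \<Omega>)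
             (\<lambda>x. (c_lam lam c x * u x + (M x *v Du x) \<bullet> Du x + h x) * \<phi> x)))"

definition ess_supp :: "(real^'n::finite) set \<Rightarrow> (real^'n \<Rightarrow> real) \<Rightarrow> (real^'n) set" where
  "ess_supp \<Omega> f = UNIV - \<Union>{U. open U \<and> (AE x in lebesgue_on (U \<inter> \<Omega>). f x = 0)}"

definition hyp_Ac_plus :: "(real^'n::finite) set \<Rightarrow> (real^'n \<Rightarrow> real) \<Rightarrow> bool" where
  "hyp_Ac_plus \<Omega> c \<longleftrightarrow> emeasure lebesgue (ess_supp \<Omega> (pos_part c)) > 0
     \<and> (\<exists>\<epsilon>>0. AE x in lebesgue_on {x\<in>\<Omega>. infdist x (ess_supp \<Omega> (pos_part c)) < \<epsilon>}.
                 neg_part c x = 0)"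

definition sym_matrix :: "real^'n^'n \<Rightarrow> bool" where
  "sym_matrix B \<longleftrightarrow> transpose B = B"

end

theory Submission
  imports Defs
begin


lemma pd_eq:
  assumes "(f has_derivative f') (at x)"
  shows "partial_deriv i f x = f' (axis i 1)"
  using frechet_derivative_at[OF assms] unfolding partial_deriv_def by simp

lemma fd_works: "f differentiable at x \<Longrightarrow> (f has_derivative frechet_derivative f (at x)) (at x)"
  using frechet_derivative_works by blast

lemma pd_add: "f differentiable at x \<Longrightarrow> g differentiable at x \<Longrightarrow>
   partial_deriv i (\<lambda>x. f x + g x) x = partial_deriv i f x + partial_deriv i g x"
  apply (rule trans[OF pd_eq[OF has_derivative_add[OF fd_works fd_works]]])
  by (auto simp: partial_deriv_def)

lemma pd_mult: "f differentiable at x \<Longrightarrow> g differentiable at x \<Longrightarrow>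
   partial_deriv i (\<lambda>x. f x * g x) x = f x * partial_deriv i g x + partial_deriv i f x * g x"
  apply (rule trans[OF pd_eq[OF has_derivative_mult[OF fd_works fd_works]]])
  by (auto simp: partial_deriv_def)

lemma pd_chain:
  fixes f :: "real^'n::finite \<Rightarrow> real"
  assumes "f differentiable at x" "(H has_real_derivative d) (at (f x))"
  shows "partial_deriv i (\<lambda>x. H (f x)) x = d * partial_deriv i f x"
proof -
  have "((\<lambda>x. H (f x)) has_derivative (\<lambda>h. frechet_derivative f (at x) h * d)) (at x)"
    using has_derivative_compose[OF fd_works[OF assms(1)] has_field_derivative_imp_has_derivative[OF assms(2)]]
    by (simp add: mult.commute)
  from pd_eq[OF this] show ?thesis by (simp add: partial_deriv_def)
qed

lemma pd_const: "partial_deriv i (\<lambda>x. c) x = 0"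
proof -
  have "((\<lambda>x. c) has_derivative (\<lambda>h. 0)) (at x)" by (rule has_derivative_const)
  from pd_eq[OF this] show ?thesis by simp
qed

lemma hd_mono: "higher_diff (Suc k) f \<Longrightarrow> higher_diff k f"
proof (induction k arbitrary: f)
  case 0 then show ?case by simp
next
  case (Suc k)
  from Suc.prems have "\<forall>i. higher_diff (Suc k) (partial_deriv i f)" "\<forall>x. f differentiable at x" "continuous_on UNIV f"
    by simp_all
  with Suc.IH show ?case by simp
qed

lemma hd_cont: "higher_diff k f \<Longrightarrow> continuous_on UNIV f"
  by (cases k) auto

lemma hd_const: "higher_diff k (\<lambda>x::real^'n::finite. c)"
proof (induction k arbitrary: c)
  case 0 then show ?case by simp
next
  case (Suc k)
  have "partial_deriv i (\<lambda>x::real^'n. c) = (\<lambda>x. 0)" for i by (rule ext) (rule pd_const)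
  then have "\<forall>i. higher_diff k (partial_deriv i (\<lambda>x::real^'n. c))" using Suc.IH[of 0] by metis
  then show ?case by (simp add: differentiable_const)
qed

lemma hd_add: "higher_diff k f \<Longrightarrow> higher_diff k g \<Longrightarrow> higher_diff k (\<lambda>x. f x + g x)"
proof (induction k arbitrary: f g)
  case 0 then show ?case by (simp add: continuous_on_add)
next
  case (Suc k)
  have "partial_deriv i (\<lambda>x. f x + g x) = (\<lambda>x. partial_deriv i f x + partial_deriv i g x)" for i
    using Suc.prems by (intro ext pd_add) auto
  with Suc show ?case by (simp only: higher_diff.simps) (auto intro!: continuous_on_add)
qed

lemma hd_mult: "higher_diff k f \<Longrightarrow> higher_diff k g \<Longrightarrow> higher_diff k (\<lambda>x. f x * g x)"
proof (induction k arbitrary: f g)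
  case 0 then show ?case by (simp add: continuous_on_mult)
next
  case (Suc k)
  have e: "partial_deriv i (\<lambda>x. f x * g x) = (\<lambda>x. f x * partial_deriv i g x + partial_deriv i f x * g x)" for i
    using Suc.prems by (intro ext pd_mult) auto
  have "higher_diff k f" "higher_diff k g" using Suc.prems hd_mono by blast+
  with Suc show ?case by (simp only: higher_diff.simps e) (auto intro!: continuous_on_mult hd_add)
qed

lemma hd_cmult: "higher_diff k f \<Longrightarrow> higher_diff k (\<lambda>x. c * f x)"
  using hd_mult[OF hd_const] by blast

lemma hd_diff: "higher_diff k f \<Longrightarrow> higher_diff k g \<Longrightarrow> higher_diff k (\<lambda>x. f x - g x)"
  using hd_add[of k f "\<lambda>x. -1 * g x"] hd_cmult[of k g "-1"] by simp

lemma hd_inverse: "higher_diff k f \<Longrightarrow> (\<forall>x. f x \<noteq> 0) \<Longrightarrow> higher_diff k (\<lambda>x. inverse (f x))"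
proof (induction k arbitrary: f)
  case 0 then show ?case by (auto intro!: continuous_on_inverse)
next
  case (Suc k)
  have d: "\<And>x. f differentiable at x" using Suc.prems by simp
  have e: "partial_deriv i (\<lambda>x. inverse (f x)) = (\<lambda>x. (- (inverse (f x) * inverse (f x))) * partial_deriv i f x)" for i
    using Suc.prems(2) by (intro ext pd_chain d) (auto intro!: derivative_eq_intros simp: power2_eq_square)
  have "higher_diff k f" using Suc.prems hd_mono by blast
  then have hi: "higher_diff k (\<lambda>x. inverse (f x))" using Suc.IH Suc.prems by blast
  have "higher_diff k (\<lambda>x. (- (inverse (f x) * inverse (f x))) * partial_deriv i f x)" for i
    using hd_mult[OF hd_cmult[OF hd_mult[OF hi hi], of "-1"], of "partial_deriv i f"] Suc.prems by simp
  moreover have "(\<lambda>x. inverse (f x)) differentiable at x" for x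
    using Deriv.has_derivative_inverse[OF _ fd_works[OF d[of x]]] Suc.prems(2) by (auto simp: differentiable_def)
  moreover have "continuous_on UNIV (\<lambda>x. inverse (f x))" using hi hd_cont by blast
  ultimately show ?case by (simp only: higher_diff.simps e) simp
qed

lemma hd_sqrt: "higher_diff k f \<Longrightarrow> (\<forall>x. f x > 0) \<Longrightarrow> higher_diff k (\<lambda>x. sqrt (f x))"
proof (induction k arbitrary: f)
  case 0 then show ?case by (auto intro!: continuous_on_real_sqrt)
next
  case (Suc k)
  have pos: "\<And>x. 0 < f x" using Suc.prems(2) by blast
  have d: "\<And>x. f differentiable at x" using Suc.prems by simp
  have e: "partial_deriv i (\<lambda>x. sqrt (f x)) = (\<lambda>x. ((1/2) * inverse (sqrt (f x))) * partial_deriv i f x)" for i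
  proof
    fix x show "partial_deriv i (\<lambda>x. sqrt (f x)) x = ((1/2) * inverse (sqrt (f x))) * partial_deriv i f x"
      using pd_chain[OF d DERIV_real_sqrt[OF pos[of x]]] by simp
  qed
  have "higher_diff k f" using Suc.prems hd_mono by blast
  then have hi: "higher_diff k (\<lambda>x. sqrt (f x))" using Suc.IH Suc.prems by blast
  have "\<forall>x. sqrt (f x) \<noteq> 0" using pos by (metis less_irrefl real_sqrt_eq_zero_cancel_iff)
  then have hi2: "higher_diff k (\<lambda>x. inverse (sqrt (f x)))" using hd_inverse[OF hi] by blast
  have "higher_diff k (\<lambda>x. ((1/2) * inverse (sqrt (f x))) * partial_deriv i f x)" for i
    using hd_mult[OF hd_cmult[OF hi2, of "1/2"], of "partial_deriv i f"] Suc.prems by simp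
  moreover have "(\<lambda>x. sqrt (f x)) differentiable at x" for x
    using d[of x] pos[of x] unfolding differentiable_def by (auto intro!: derivative_eq_intros simp: less_imp_neq[symmetric])
  moreover have "continuous_on UNIV (\<lambda>x. sqrt (f x))" using hi hd_cont by blast
  ultimately show ?case by (simp only: higher_diff.simps e) simp
qed


definition Gf :: "real \<Rightarrow> real" where "Gf t = t + sqrt (t * t + 1) + 1"
definition Ff :: "real \<Rightarrow> real" where "Ff t = inverse (Gf t)"
definition Gd :: "real \<Rightarrow> real" where "Gd t = 1 + t / sqrt (t * t + 1)"
definition Fd :: "real \<Rightarrow> real" where "Fd t = - Gd t * (Ff t * Ff t)"

lemma tt1: "0 < t * t + (1::real)"
proof -
  have "0 \<le> t * t" by simp
  then show ?thesis by linarith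
qed

lemma sqrt_gt_abs: "\<bar>t\<bar> < sqrt (t * t + 1)"
  by (metis abs_mult_self_eq less_add_one real_sqrt_abs2 real_sqrt_less_iff abs_ge_zero
      real_sqrt_mult_self abs_of_nonneg order.strict_trans1 real_sqrt_lt_0_iff)

lemma Gf_ge1: "1 \<le> Gf t"
  using sqrt_gt_abs[of t] unfolding Gf_def by linarith

lemma Gf_pos: "0 < Gf t" using Gf_ge1[of t] by linarith

lemma Ff_pos: "0 < Ff t" unfolding Ff_def using Gf_pos by simp
lemma Ff_le1: "Ff t \<le> 1" unfolding Ff_def using Gf_ge1[of t] by (simp add: inverse_le_1_iff)

lemma Gd_bounds: "0 \<le> Gd t" "Gd t \<le> 2"
proof -
  have s: "0 < sqrt (t*t+1)" using tt1 by simp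
  define q where "q = t / sqrt (t*t+1)"
  have "\<bar>q\<bar> \<le> 1" unfolding q_def using sqrt_gt_abs[of t] s by (simp add: abs_div divide_le_eq_1)
  then have "-1 \<le> q" "q \<le> 1" by linarith+
  then show "0 \<le> Gd t" "Gd t \<le> 2" unfolding Gd_def q_def[symmetric] by auto
qed

lemma Gd_ge1: "0 \<le> t \<Longrightarrow> 1 \<le> Gd t"
  unfolding Gd_def using tt1[of t] by simp

lemma Gf_upper: "0 \<le> t \<Longrightarrow> Gf t \<le> 2 * t + 2"
proof -
  assume t: "0 \<le> t"
  have "sqrt (t*t+1) \<le> t + 1"
    using t by (intro real_le_lsqrt) (auto simp: algebra_simps power2_eq_square)
  then show ?thesis unfolding Gf_def by linarith
qed

lemma Gf_deriv: "(Gf has_real_derivative Gd t) (at t)"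
proof -
  have s: "0 < t*t+1" by (rule tt1)
  show ?thesis unfolding Gf_def Gd_def
    using s by (auto intro!: derivative_eq_intros simp: field_simps less_imp_neq[symmetric])
qed

lemma Ff_deriv: "(Ff has_real_derivative Fd t) (at t)"
proof -
  have "((\<lambda>t. inverse (Gf t)) has_real_derivative (- (Gd t * inverse(Gf t ^ Suc (Suc 0))))) (at t)"
    by (rule DERIV_inverse_fun[OF Gf_deriv]) (use Gf_pos[of t] in simp)
  then show ?thesis unfolding Ff_def[abs_def] Fd_def by (simp add: Ff_def power2_eq_square algebra_simps)
qed

lemma Fd_bound: "\<bar>Fd t\<bar> \<le> 2"
proof -
  have "\<bar>Fd t\<bar> = Gd t * (Ff t * Ff t)" unfolding Fd_def using Gd_bounds(1)[of t] Ff_pos[of t] by (simp add: abs_mult)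
  also have "\<dots> \<le> 2 * (1 * 1)"
    using Gd_bounds[of t] Ff_pos[of t] Ff_le1[of t] by (intro mult_mono) (auto intro: mult_mono)
  finally show ?thesis by simp
qed

lemma Fd_neg: "0 \<le> t \<Longrightarrow> Fd t \<le> - (Ff t * Ff t)"
  unfolding Fd_def using Gd_ge1[of t] mult_right_mono[of 1 "Gd t" "Ff t * Ff t"] by simp

lemma cont_Ff: "continuous_on UNIV Ff"
  using Ff_deriv by (metis DERIV_isCont continuous_at_imp_continuous_on)

lemma cont_Fd: "continuous_on UNIV Fd"
proof -
  have "continuous_on UNIV Gd" unfolding Gd_def
    by (intro continuous_intros) (use tt1 in \<open>auto simp: less_imp_neq[symmetric]\<close>)
  then show ?thesis unfolding Fd_def using cont_Ff by (intro continuous_intros) auto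
qed

lemma hd_Ff: "higher_diff k w \<Longrightarrow> higher_diff k (\<lambda>x. Ff (w x))"
proof -
  assume w: "higher_diff k w"
  have ww: "higher_diff k (\<lambda>x. w x * w x + 1)" by (intro hd_add hd_mult w hd_const)
  have s: "higher_diff k (\<lambda>x. sqrt (w x * w x + 1))"
    by (rule hd_sqrt[OF ww]) (simp add: tt1)
  have g: "higher_diff k (\<lambda>x. Gf (w x))" unfolding Gf_def by (intro hd_add w s hd_const)
  show ?thesis unfolding Ff_def by (rule hd_inverse[OF g]) (use Gf_pos in \<open>simp add: less_imp_neq[symmetric]\<close>)
qed


lemma smooth_hd: "smooth_fn f \<Longrightarrow> higher_diff k f" unfolding smooth_fn_def by blast

lemma smooth_diffble: "smooth_fn f \<Longrightarrow> f differentiable at x"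
  using smooth_hd[of f 1] by simp

lemma smooth_cont: "smooth_fn f \<Longrightarrow> continuous_on UNIV f"
  using smooth_hd[of f 0] by simp

lemma smooth_pd_cont: "smooth_fn f \<Longrightarrow> continuous_on UNIV (partial_deriv i f)"
  using smooth_hd[of f 1] by simp

lemma smooth_grad_cont: "smooth_fn (f :: real^'n::finite \<Rightarrow> real) \<Longrightarrow> continuous_on UNIV (grad f)"
  unfolding grad_def[abs_def] by (intro continuous_on_vec_lambda smooth_pd_cont)

lemma smooth_diff: "smooth_fn f \<Longrightarrow> smooth_fn g \<Longrightarrow> smooth_fn (\<lambda>x. f x - g x)"
  unfolding smooth_fn_def by (blast intro: hd_diff)

lemma grad_diff: "f differentiable at x \<Longrightarrow> g differentiable at x \<Longrightarrow>
   grad (\<lambda>x. f x - g x) x = grad f x - grad g x"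
proof -
  assume d: "f differentiable at x" "g differentiable at x"
  have "partial_deriv i (\<lambda>x. f x - g x) x = partial_deriv i f x - partial_deriv i g x" for i
    by (rule trans[OF pd_eq[OF has_derivative_diff[OF fd_works[OF d(1)] fd_works[OF d(2)]]]])
       (simp add: partial_deriv_def)
  then show ?thesis unfolding grad_def by (simp add: vec_eq_iff)
qed

definition psiF :: "(real^'n::finite \<Rightarrow> real) \<Rightarrow> (real^'n \<Rightarrow> real) \<Rightarrow> real^'n \<Rightarrow> real" where
  "psiF \<phi> w x = \<phi> x * \<phi> x * Ff (w x)"

lemma smooth_psiF: "smooth_fn \<phi> \<Longrightarrow> smooth_fn w \<Longrightarrow> smooth_fn (psiF \<phi> w)"
  unfolding smooth_fn_def psiF_def[abs_def] by (intro allI hd_mult hd_Ff) auto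

lemma grad_psiF:
  assumes "\<phi> differentiable at x" "w differentiable at x"
  shows "grad (psiF \<phi> w) x = (2 * \<phi> x * Ff (w x)) *\<^sub>R grad \<phi> x + (\<phi> x * \<phi> x * Fd (w x)) *\<^sub>R grad w x"
proof -
  have dF: "(\<lambda>x. Ff (w x)) differentiable at x"
    using differentiable_def has_derivative_compose[OF fd_works[OF assms(2)] has_field_derivative_imp_has_derivative[OF Ff_deriv]]
    by blast
  have dpp: "(\<lambda>x. \<phi> x * \<phi> x) differentiable at x" using assms(1) by (simp add: differentiable_mult)
  have "partial_deriv i (psiF \<phi> w) x
      = (2 * \<phi> x * Ff (w x)) * partial_deriv i \<phi> x + (\<phi> x * \<phi> x * Fd (w x)) * partial_deriv i w x" for i
  proof -
    have "partial_deriv i (psiF \<phi> w) x = partial_deriv i (\<lambda>x. (\<phi> x * \<phi> x) * Ff (w x)) x"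
      by (simp add: psiF_def[abs_def])
    also have "\<dots> = (\<phi> x * \<phi> x) * partial_deriv i (\<lambda>x. Ff (w x)) x + partial_deriv i (\<lambda>x. \<phi> x * \<phi> x) x * Ff (w x)"
      by (rule pd_mult[OF dpp dF])
    also have "partial_deriv i (\<lambda>x. Ff (w x)) x = Fd (w x) * partial_deriv i w x"
      by (rule pd_chain[OF assms(2) Ff_deriv])
    also have "partial_deriv i (\<lambda>x. \<phi> x * \<phi> x) x = \<phi> x * partial_deriv i \<phi> x + partial_deriv i \<phi> x * \<phi> x"
      by (rule pd_mult[OF assms(1) assms(1)])
    finally show ?thesis by (simp add: algebra_simps)
  qed
  then show ?thesis unfolding grad_def by (simp add: vec_eq_iff)
qed

lemma tsupp_psiF: "tsupp (psiF \<phi> w) \<subseteq> tsupp \<phi>"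
  unfolding tsupp_def psiF_def by (intro closure_mono) auto

lemma test_psiF: "test_fn \<Omega> \<phi> \<Longrightarrow> smooth_fn w \<Longrightarrow> test_fn \<Omega> (psiF \<phi> w)"
proof -
  assume a: "test_fn \<Omega> \<phi>" "smooth_fn w"
  have "closed (tsupp (psiF \<phi> w))" unfolding tsupp_def by simp
  then have "compact (tsupp (psiF \<phi> w))"
    using a tsupp_psiF[of \<phi> w] unfolding test_fn_def by (metis compact_Int_closed inf.absorb_iff2)
  then show ?thesis using a tsupp_psiF[of \<phi> w] smooth_psiF unfolding test_fn_def by blast
qed

lemma bounded_on_closure:
  fixes f :: "real^'n::finite \<Rightarrow> 'b::real_normed_vector"
  assumes "continuous_on UNIV f" "bounded \<Omega>"
  shows "\<exists>B. \<forall>x\<in>\<Omega>. norm (f x) \<le> B"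
proof -
  have "compact (closure \<Omega>)" using assms(2) by (simp add: compact_closure)
  moreover have "continuous_on (closure \<Omega>) f" using continuous_on_subset[OF assms(1)] by blast
  ultimately have "compact (f ` closure \<Omega>)" using compact_continuous_image by blast
  then obtain B where "\<forall>y\<in>f ` closure \<Omega>. norm y \<le> B" using compact_imp_bounded bounded_iff by metis
  then show ?thesis using closure_subset by fastforce
qed


lemma sym_inner:
  fixes B :: "real^'n::finite^'n"
  assumes "transpose B = B"
  shows "x \<bullet> (B *v y) = (B *v x) \<bullet> y"
proof -
  have "x \<bullet> (B *v y) = (x v* B) \<bullet> y" by (simp add: dot_lmul_matrix)
  also have "x v* B = transpose B *v x" by simp
  finally show ?thesis using assms by simp
qed

lemma quad_disc:
  fixes a b c :: real
  assumes "\<And>t. 0 \<le> a + 2*t*b + t^2*c" "0 \<le> c"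
  shows "b^2 \<le> a * c"
proof (cases "c = 0")
  case True
  have "b = 0"
  proof (rule ccontr)
    assume "b \<noteq> 0"
    have "0 \<le> a + 2*(-(a+1)/(2*b))*b" using assms(1)[of "-(a+1)/(2*b)"] True by simp
    also have "\<dots> = -1" using \<open>b\<noteq>0\<close> by (simp add: field_simps)
    finally show False by simp
  qed
  then show ?thesis using True by simp
next
  case False
  then have c: "c > 0" using assms(2) by simp
  have "0 \<le> a + 2*(-b/c)*b + (-b/c)^2*c" by (rule assms(1))
  also have "\<dots> = a - b^2/c" using c by (simp add: field_simps power2_eq_square)
  finally have "b^2/c \<le> a" by simp
  then show ?thesis using c by (simp add: field_simps)
qed

lemma sym_psd_bound:
  fixes B :: "real^'n::finite^'n"
  assumes sym: "transpose B = B" and psd: "\<And>\<xi>. 0 \<le> \<xi> \<bullet> (B *v \<xi>)"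
    and up: "\<And>\<xi>. \<xi> \<bullet> (B *v \<xi>) \<le> m * (norm \<xi>)\<^sup>2"
  shows "norm (B *v \<xi>) \<le> m * norm \<xi>"
proof -
  define y where "y = B *v \<xi>"
  have cs: "(y \<bullet> (B *v \<xi>))^2 \<le> (\<xi> \<bullet> (B *v \<xi>)) * (y \<bullet> (B *v y))"
  proof (rule quad_disc)
    fix t :: real
    have "0 \<le> (\<xi> + t *\<^sub>R y) \<bullet> (B *v (\<xi> + t *\<^sub>R y))" by (rule psd)
    also have "\<dots> = \<xi> \<bullet> (B *v \<xi>) + 2 * t * (y \<bullet> (B *v \<xi>)) + t^2 * (y \<bullet> (B *v y))"
      using sym_inner[OF sym, of \<xi> y]
      by (simp add: matrix_vector_right_distrib matrix_vector_mult_scaleR inner_add_left inner_add_right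
          power2_eq_square algebra_simps inner_commute)
    finally show "0 \<le> \<xi> \<bullet> (B *v \<xi>) + 2 * t * (y \<bullet> (B *v \<xi>)) + t^2 * (y \<bullet> (B *v y))" .
  qed (rule psd)
  have yy: "y \<bullet> (B *v \<xi>) = (norm y)^2" by (simp add: y_def power2_norm_eq_inner)
  have m0: "0 \<le> m"
  proof -
    have "0 \<le> axis undefined 1 \<bullet> (B *v axis undefined 1)" by (rule psd)
    also have "\<dots> \<le> m * (norm (axis undefined (1::real) :: real^'n))\<^sup>2" by (rule up)
    finally show ?thesis by (simp add: norm_axis_1)
  qed
  have "(norm y)^4 \<le> (m * (norm \<xi>)^2) * (m * (norm y)^2)"
  proof -
    have "(norm y)^4 = (y \<bullet> (B *v \<xi>))^2" using yy by (simp add: power_mult[symmetric])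
    also have "\<dots> \<le> (\<xi> \<bullet> (B *v \<xi>)) * (y \<bullet> (B *v y))" by (rule cs)
    also have "\<dots> \<le> (m * (norm \<xi>)^2) * (m * (norm y)^2)"
      by (intro mult_mono up psd) (use m0 in simp)
    finally show ?thesis .
  qed
  then have "(norm y)^2 * (norm y)^2 \<le> (norm y)^2 * (m * norm \<xi>)^2"
    by (simp add: power_mult_distrib algebra_simps power4_eq_xxxx power2_eq_square)
  then have "(norm y)^2 \<le> (m * norm \<xi>)^2 \<or> norm y = 0"
  proof (cases "norm y = 0")
    case False
    then have "0 < (norm y)^2" by simp
    with \<open>(norm y)^2 * (norm y)^2 \<le> (norm y)^2 * (m * norm \<xi>)^2\<close> show ?thesis
      using mult_le_cancel_left_pos by blast
  qed simp
  then have "norm y \<le> m * norm \<xi>"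
  proof
    assume "(norm y)^2 \<le> (m * norm \<xi>)^2"
    then show ?thesis by (rule power2_le_imp_le) (use m0 in simp)
  qed (use m0 in simp)
  then show ?thesis unfolding y_def .
qed

lemma vec_meas:
  fixes f :: "'a \<Rightarrow> real^'n::finite"
  assumes "\<And>i. (\<lambda>x. f x $ i) \<in> borel_measurable M"
  shows "f \<in> borel_measurable M"
proof -
  have "\<forall>b\<in>Basis. (\<lambda>x. f x \<bullet> b) \<in> borel_measurable M"
  proof
    fix b :: "real^'n" assume "b \<in> Basis"
    then obtain i where "b = axis i 1" unfolding Basis_vec_def Basis_real_def by blast
    then show "(\<lambda>x. f x \<bullet> b) \<in> borel_measurable M" using assms[of i] by (simp add: inner_axis)
  qed
  then show ?thesis using borel_measurable_euclidean_space by blast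
qed

lemma vec_nth_meas: "f \<in> borel_measurable M \<Longrightarrow> (\<lambda>x. (f x :: real^'n::finite) $ i) \<in> borel_measurable M"
  using measurable_compose[OF _ borel_measurable_nth] by blast

lemma mat_vec_meas:
  fixes A :: "'a \<Rightarrow> real^'n::finite^'n"
  assumes "\<And>i j. (\<lambda>x. A x $ i $ j) \<in> borel_measurable M" "y \<in> borel_measurable M"
  shows "(\<lambda>x. A x *v y x) \<in> borel_measurable M"
proof (rule vec_meas)
  fix i
  have [measurable]: "(\<lambda>x. A x $ i $ j) \<in> borel_measurable M" for j by (rule assms(1))
  have [measurable]: "(\<lambda>x. y x $ j) \<in> borel_measurable M" for j by (rule vec_nth_meas[OF assms(2)])
  show "(\<lambda>x. (A x *v y x) $ i) \<in> borel_measurable M"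
    unfolding matrix_vector_mult_def by simp measurable
qed

lemma AE_subseq_L2:
  fixes f :: "nat \<Rightarrow> 'a \<Rightarrow> real"
  assumes "\<And>k. integrable M (\<lambda>x. (f k x - g x)^2)"
    and "(\<lambda>k. integral\<^sup>L M (\<lambda>x. (f k x - g x)^2)) \<longlonglongrightarrow> 0"
  shows "\<exists>r. strict_mono r \<and> (AE x in M. (\<lambda>k. f (r k) x) \<longlonglongrightarrow> g x)"
proof -
  have "\<exists>r::nat\<Rightarrow>nat. strict_mono r \<and> (AE x in M. (\<lambda>n. (f (r n) x - g x)^2) \<longlonglongrightarrow> 0)"
    by (rule tendsto_L1_AE_subseq) (use assms in auto)
  then obtain r where r: "strict_mono r" "AE x in M. (\<lambda>n. (f (r n) x - g x)^2) \<longlonglongrightarrow> 0" by blast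
  have "AE x in M. (\<lambda>k. f (r k) x) \<longlonglongrightarrow> g x"
    using r(2)
  proof eventually_elim
    case (elim x)
    then have "(\<lambda>n. sqrt ((f (r n) x - g x)^2)) \<longlonglongrightarrow> sqrt 0" by (intro tendsto_intros)
    then have "(\<lambda>n. \<bar>f (r n) x - g x\<bar>) \<longlonglongrightarrow> 0" by simp
    then have "(\<lambda>n. f (r n) x - g x) \<longlonglongrightarrow> 0" by (simp add: tendsto_rabs_zero_iff)
    then have "(\<lambda>n. (f (r n) x - g x) + g x) \<longlonglongrightarrow> 0 + g x" by (intro tendsto_intros)
    then show ?case by simp
  qed
  with r show ?thesis by blast
qed


lemma young_ineq: "\<bar>x * y\<bar> \<le> (d * x^2 + y^2 / d) / 2" if "d > 0" for x y d :: real
proof -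
  have "0 \<le> (sqrt d * \<bar>x\<bar> - \<bar>y\<bar> / sqrt d)^2" by simp
  also have "\<dots> = d * x^2 + y^2/d - 2 * \<bar>x * y\<bar>"
    using that by (simp add: power2_eq_square field_simps abs_mult real_sqrt_mult[symmetric])
  finally show ?thesis by simp
qed

lemma inner_young: "\<bar>a \<bullet> b\<bar> \<le> (d * (norm a)^2 + (norm b)^2 / d) / 2" if "d > 0" for a b :: "real^'n::finite"
proof -
  have "\<bar>a \<bullet> b\<bar> \<le> norm a * norm b" by (rule Cauchy_Schwarz_ineq2)
  also have "\<dots> \<le> (d * (norm a)^2 + (norm b)^2 / d) / 2" using young_ineq[OF that, of "norm a" "norm b"] by simp
  finally show ?thesis .
qed

lemma integrable_inner_L2:
  fixes a b :: "'a \<Rightarrow> real^'n::finite"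
  assumes "a \<in> borel_measurable M" "b \<in> borel_measurable M"
    "integrable M (\<lambda>x. (norm (a x))^2)" "integrable M (\<lambda>x. (norm (b x))^2)"
  shows "integrable M (\<lambda>x. a x \<bullet> b x)"
proof -
  have i: "integrable M (\<lambda>x. ((norm (a x))^2 + (norm (b x))^2) / 2)" using assms by auto
  have m: "(\<lambda>x. a x \<bullet> b x) \<in> borel_measurable M" using assms by measurable
  have b: "AE x in M. norm (a x \<bullet> b x) \<le> norm (((norm (a x))^2 + (norm (b x))^2) / 2)"
    using inner_young[of 1] by (auto simp: add_nonneg_nonneg)
  show ?thesis by (rule Bochner_Integration.integrable_bound[OF i m b])
qed

lemma L2_norm_diff_sq: "(norm (a - b))^2 \<le> 2 * (norm a)^2 + 2 * (norm b)^2" for a b :: "'b::real_normed_vector"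
proof -
  have "norm (a - b) \<le> norm a + norm b" by (rule norm_triangle_ineq4)
  then have "(norm (a - b))^2 \<le> (norm a + norm b)^2" by (simp add: power_mono)
  also have "\<dots> \<le> 2 * (norm a)^2 + 2 * (norm b)^2"
    by (smt (verit) power2_sum sum_squares_bound)
  finally show ?thesis .
qed

lemma young_tendsto:
  fixes a :: "'a \<Rightarrow> real^'n::finite" and d :: "nat \<Rightarrow> 'a \<Rightarrow> real^'n"
  assumes am: "a \<in> borel_measurable M" and dm: "\<And>k. d k \<in> borel_measurable M"
    and ai: "integrable M (\<lambda>x. (norm (a x))^2)" and di: "\<And>k. integrable M (\<lambda>x. (norm (d k x))^2)"
    and lim: "(\<lambda>k. integral\<^sup>L M (\<lambda>x. (norm (d k x))^2)) \<longlonglongrightarrow> 0"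
  shows "(\<lambda>k. integral\<^sup>L M (\<lambda>x. a x \<bullet> d k x)) \<longlonglongrightarrow> 0"
proof (rule LIMSEQ_I)
  fix r :: real assume r: "0 < r"
  define S where "S = integral\<^sup>L M (\<lambda>x. (norm (a x))^2)"
  have S0: "0 \<le> S" unfolding S_def by (rule integral_nonneg_AE) auto
  define \<delta> where "\<delta> = r / (S + 1)"
  have \<delta>: "0 < \<delta>" using r S0 by (simp add: \<delta>_def)
  have "\<delta> * S < r" using r S0 by (simp add: \<delta>_def field_simps)
  have "\<forall>\<^sub>F k in sequentially. integral\<^sup>L M (\<lambda>x. (norm (d k x))^2) < r * \<delta>"
    using order_tendstoD(2)[OF lim] r \<delta> by simp
  then obtain N where N: "\<And>k. k \<ge> N \<Longrightarrow> integral\<^sup>L M (\<lambda>x. (norm (d k x))^2) < r * \<delta>"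
    by (auto simp: eventually_sequentially)
  show "\<exists>N. \<forall>k\<ge>N. norm (integral\<^sup>L M (\<lambda>x. a x \<bullet> d k x) - 0) < r"
  proof (intro exI allI impI)
    fix k assume "k \<ge> N"
    have ii: "integrable M (\<lambda>x. (\<delta> * (norm (a x))^2 + (norm (d k x))^2 / \<delta>) / 2)"
      using ai di by auto
    have "norm (integral\<^sup>L M (\<lambda>x. a x \<bullet> d k x)) \<le> integral\<^sup>L M (\<lambda>x. norm (a x \<bullet> d k x))"
      by (rule integral_norm_bound)
    also have "\<dots> \<le> integral\<^sup>L M (\<lambda>x. (\<delta> * (norm (a x))^2 + (norm (d k x))^2 / \<delta>) / 2)"
      by (rule integral_mono_AE'[OF ii]) (use inner_young[OF \<delta>] \<delta> in \<open>auto intro!: AE_I2 add_nonneg_nonneg\<close>)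
    also have "\<dots> = (\<delta> * S + integral\<^sup>L M (\<lambda>x. (norm (d k x))^2) / \<delta>) / 2"
      using ai di by (simp add: S_def)
    also have "\<dots> < (r + r) / 2"
    proof -
      have "integral\<^sup>L M (\<lambda>x. (norm (d k x))^2) / \<delta> < r"
        using N[OF \<open>k \<ge> N\<close>] \<delta> by (simp add: divide_less_eq mult.commute)
      with \<open>\<delta> * S < r\<close> show ?thesis by (intro divide_strict_right_mono add_strict_mono) auto
    qed
    finally show "norm (integral\<^sup>L M (\<lambda>x. a x \<bullet> d k x) - 0) < r" by simp
  qed
qed

lemma pass_limit:
  fixes a g :: "'a \<Rightarrow> real^'n::finite" and gk :: "nat \<Rightarrow> 'a \<Rightarrow> real^'n"
  assumes am: "a \<in> borel_measurable M" and gm: "g \<in> borel_measurable M" and gkm: "\<And>k. gk k \<in> borel_measurable M"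
    and ai: "integrable M (\<lambda>x. (norm (a x))^2)" and gi: "integrable M (\<lambda>x. (norm (g x))^2)"
    and di: "\<And>k. integrable M (\<lambda>x. (norm (gk k x - g x))^2)"
    and lim: "(\<lambda>k. integral\<^sup>L M (\<lambda>x. (norm (gk k x - g x))^2)) \<longlonglongrightarrow> 0"
    and Ri: "integrable M R" and psim: "\<And>k. psik k \<in> borel_measurable M" and psm: "psi \<in> borel_measurable M"
    and psilim: "AE x in M. (\<lambda>k. psik k x) \<longlonglongrightarrow> psi x"
    and bd: "\<And>k. AE x in M. \<bar>psik k x\<bar> \<le> B"
    and eq: "\<And>k. integral\<^sup>L M (\<lambda>x. a x \<bullet> gk k x) = integral\<^sup>L M (\<lambda>x. R x * psik k x)"
  shows "integral\<^sup>L M (\<lambda>x. a x \<bullet> g x) = integral\<^sup>L M (\<lambda>x. R x * psi x)"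
proof -
  have dm: "(\<lambda>x. gk k x - g x) \<in> borel_measurable M" for k using gkm gm by measurable
  have t1: "(\<lambda>k. integral\<^sup>L M (\<lambda>x. a x \<bullet> (gk k x - g x))) \<longlonglongrightarrow> 0"
    by (rule young_tendsto[OF am dm ai di lim])
  have i1: "integrable M (\<lambda>x. a x \<bullet> (gk k x - g x))" for k
    by (rule integrable_inner_L2[OF am dm ai di])
  have i2: "integrable M (\<lambda>x. a x \<bullet> g x)" by (rule integrable_inner_L2[OF am gm ai gi])
  have "(\<lambda>k. integral\<^sup>L M (\<lambda>x. a x \<bullet> (gk k x - g x)) + integral\<^sup>L M (\<lambda>x. a x \<bullet> g x))
        \<longlonglongrightarrow> 0 + integral\<^sup>L M (\<lambda>x. a x \<bullet> g x)"
    by (intro tendsto_intros t1)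
  moreover have "integral\<^sup>L M (\<lambda>x. a x \<bullet> (gk k x - g x)) + integral\<^sup>L M (\<lambda>x. a x \<bullet> g x)
      = integral\<^sup>L M (\<lambda>x. R x * psik k x)" for k
  proof -
    have "integral\<^sup>L M (\<lambda>x. a x \<bullet> (gk k x - g x)) + integral\<^sup>L M (\<lambda>x. a x \<bullet> g x)
        = integral\<^sup>L M (\<lambda>x. a x \<bullet> (gk k x - g x) + a x \<bullet> g x)"
      using i1 i2 by simp
    also have "\<dots> = integral\<^sup>L M (\<lambda>x. a x \<bullet> gk k x)" by (simp add: inner_diff_right)
    finally show ?thesis using eq by simp
  qed
  ultimately have L1: "(\<lambda>k. integral\<^sup>L M (\<lambda>x. R x * psik k x)) \<longlonglongrightarrow> integral\<^sup>L M (\<lambda>x. a x \<bullet> g x)"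
    by simp
  have Rm: "R \<in> borel_measurable M" using Ri by auto
  have L2: "(\<lambda>k. integral\<^sup>L M (\<lambda>x. R x * psik k x)) \<longlonglongrightarrow> integral\<^sup>L M (\<lambda>x. R x * psi x)"
  proof (rule integral_dominated_convergence[where w="\<lambda>x. \<bar>B\<bar> * \<bar>R x\<bar>"])
    show "(\<lambda>x. R x * psi x) \<in> borel_measurable M" using Rm psm by measurable
    show "(\<lambda>x. R x * psik k x) \<in> borel_measurable M" for k using Rm psim by measurable
    show "integrable M (\<lambda>x. \<bar>B\<bar> * \<bar>R x\<bar>)" using Ri by auto
    show "AE x in M. (\<lambda>k. R x * psik k x) \<longlonglongrightarrow> R x * psi x"
      using psilim by eventually_elim (intro tendsto_intros)
    show "AE x in M. norm (R x * psik k x) \<le> \<bar>B\<bar> * \<bar>R x\<bar>" for k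
      using bd[of k]
    proof eventually_elim
      case (elim x)
      then have "\<bar>R x\<bar> * \<bar>psik k x\<bar> \<le> \<bar>R x\<bar> * \<bar>B\<bar>" by (intro mult_left_mono) auto
      then show ?case by (simp add: abs_mult mult.commute)
    qed
  qed
  from LIMSEQ_unique[OF L1 L2] show ?thesis .
qed


lemma intb:
  fixes f g :: "'a \<Rightarrow> real"
  assumes "integrable M g" "f \<in> borel_measurable M" "AE x in M. \<bar>f x\<bar> \<le> g x"
  shows "integrable M f"
proof (rule Bochner_Integration.integrable_bound[OF assms(1,2)])
  show "AE x in M. norm (f x) \<le> norm (g x)" using assms(3) by eventually_elim auto
qed

lemma meas_cont: "continuous_on UNIV f \<Longrightarrow> \<Omega> \<in> sets lebesgue \<Longrightarrow> f \<in> borel_measurable (lebesgue_on \<Omega>)"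
  by (rule continuous_imp_measurable_on_sets_lebesgue[OF continuous_on_subset]) auto

lemma AE_on: "(\<And>x. x \<in> \<Omega> \<Longrightarrow> P x) \<Longrightarrow> AE x in lebesgue_on \<Omega>. P x"
  by (rule AE_I2) simp

lemma dct0:
  fixes f :: "nat \<Rightarrow> 'a \<Rightarrow> real"
  assumes "\<And>k. f k \<in> borel_measurable M" "AE x in M. (\<lambda>k. f k x) \<longlonglongrightarrow> 0"
    "\<And>k. AE x in M. \<bar>f k x\<bar> \<le> w x" "integrable M w"
  shows "(\<lambda>k. integral\<^sup>L M (f k)) \<longlonglongrightarrow> 0"
proof -
  have "(\<lambda>k. integral\<^sup>L M (f k)) \<longlonglongrightarrow> integral\<^sup>L M (\<lambda>x. 0)"
    by (rule integral_dominated_convergence[where w=w]) (use assms in auto)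
  then show ?thesis by simp
qed

lemma sq3: "(norm (a + b + c))^2 \<le> 3 * ((norm a)^2 + (norm b)^2 + (norm c)^2)" for a b c :: "'b::real_normed_vector"
proof -
  have "norm (a + b + c) \<le> norm a + norm b + norm c" using norm_triangle_ineq[of "a+b" c] norm_triangle_ineq[of a b] by linarith
  then have "(norm (a + b + c))^2 \<le> (norm a + norm b + norm c)^2" by (simp add: power_mono)
  also have "\<dots> \<le> 3 * ((norm a)^2 + (norm b)^2 + (norm c)^2)"
  proof -
    have eq: "3*(x^2+y^2+z^2) - (x+y+z)^2 = (x-y)^2+(y-z)^2+(x-z)^2" for x y z :: real by algebra
    have nn: "0 \<le> (x-y)^2+(y-z)^2+(x-z)^2" for x y z :: real by simp
    show ?thesis using eq[of "norm a" "norm b" "norm c"] nn[of "norm a" "norm b" "norm c"] by linarith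
  qed
  finally show ?thesis .
qed

lemma sq_le_quad: "t * K - \<theta> * t^2 \<le> K^2 / (4 * \<theta>)" if "\<theta> > 0" for t K \<theta> :: real
proof -
  have "0 \<le> (2 * \<theta> * t - K)^2" by simp
  then have "0 \<le> 4*\<theta>^2*t^2 - 4*\<theta>*t*K + K^2" by (simp add: power2_eq_square algebra_simps)
  then have "4*\<theta>*(t*K - \<theta>*t^2) \<le> K^2" by (simp add: power2_eq_square algebra_simps)
  then show ?thesis using that by (simp add: field_simps mult.commute)
qed


lemma pw2:
  fixes AA MM :: "real^'n::finite^'n" and a g du :: "real^'n" and p F D \<theta> :: real
  assumes sym: "transpose AA = AA" and \<theta>: "\<theta> > 0" and ell: "\<And>\<xi>. \<theta> * (norm \<xi>)\<^sup>2 \<le> \<xi> \<bullet> (AA *v \<xi>)"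
    and F: "F > 0" and D: "D \<le> - (F * F)"
  shows "(AA *v a) \<bullet> ((2 * p * F) *\<^sub>R g + (p * p * D) *\<^sub>R a) - 2 * (p * p * F) * ((MM *v du) \<bullet> a)
     \<le> (2 * norm (AA *v g) + 2 * \<bar>p\<bar> * norm (MM *v du))\<^sup>2 / (4 * \<theta>)"
proof -
  define t where "t = \<bar>p\<bar> * F * norm a"
  define K where "K = 2 * norm (AA *v g) + 2 * \<bar>p\<bar> * norm (MM *v du)"
  have e1: "(AA *v a) \<bullet> g = a \<bullet> (AA *v g)" using sym_inner[OF sym, of a g] by (simp add: inner_commute)
  have "(AA *v a) \<bullet> ((2 * p * F) *\<^sub>R g) = 2 * p * F * (a \<bullet> (AA *v g))" using e1 by simp
  also have "\<dots> \<le> 2 * \<bar>p\<bar> * F * (norm a * norm (AA *v g))"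
  proof -
    have "2 * p * F * (a \<bullet> (AA *v g)) \<le> \<bar>2 * p * F * (a \<bullet> (AA *v g))\<bar>" by simp
    also have "\<dots> = 2 * \<bar>p\<bar> * F * \<bar>a \<bullet> (AA *v g)\<bar>" using F by (simp add: abs_mult)
    also have "\<dots> \<le> 2 * \<bar>p\<bar> * F * (norm a * norm (AA *v g))"
      using F by (intro mult_left_mono Cauchy_Schwarz_ineq2) auto
    finally show ?thesis .
  qed
  finally have T1: "(AA *v a) \<bullet> ((2 * p * F) *\<^sub>R g) \<le> t * (2 * norm (AA *v g))"
    by (simp add: t_def algebra_simps)
  have Q: "\<theta> * (norm a)\<^sup>2 \<le> (AA *v a) \<bullet> a" using ell[of a] by (simp add: inner_commute)
  have pp: "0 \<le> p * p" by simp
  have "(AA *v a) \<bullet> ((p * p * D) *\<^sub>R a) = (p * p * D) * ((AA *v a) \<bullet> a)" by simp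
  also have "\<dots> \<le> (p * p * (- (F * F))) * ((AA *v a) \<bullet> a)"
  proof (rule mult_right_mono)
    show "p * p * D \<le> p * p * - (F * F)" using D pp by (rule mult_left_mono)
    show "0 \<le> (AA *v a) \<bullet> a" using Q \<theta> by (smt (verit) mult_nonneg_nonneg zero_le_power2)
  qed
  also have "\<dots> \<le> (p * p * (- (F * F))) * (\<theta> * (norm a)\<^sup>2)"
    using Q by (intro mult_left_mono_neg) auto
  also have "\<dots> = - \<theta> * t\<^sup>2" by (simp add: t_def power2_eq_square power_mult_distrib algebra_simps abs_mult_self_eq)
  finally have T2: "(AA *v a) \<bullet> ((p * p * D) *\<^sub>R a) \<le> - \<theta> * t\<^sup>2" .
  have "- 2 * (p * p * F) * ((MM *v du) \<bullet> a) \<le> \<bar>2 * (p * p * F) * ((MM *v du) \<bullet> a)\<bar>" by simp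
  also have "\<dots> = 2 * (\<bar>p\<bar> * \<bar>p\<bar> * F) * \<bar>(MM *v du) \<bullet> a\<bar>" using F by (simp add: abs_mult)
  also have "\<dots> \<le> 2 * (\<bar>p\<bar> * \<bar>p\<bar> * F) * (norm (MM *v du) * norm a)"
    using F by (intro mult_left_mono Cauchy_Schwarz_ineq2) auto
  also have "\<dots> = t * (2 * \<bar>p\<bar> * norm (MM *v du))" by (simp add: t_def algebra_simps)
  finally have T3: "- 2 * (p * p * F) * ((MM *v du) \<bullet> a) \<le> t * (2 * \<bar>p\<bar> * norm (MM *v du))" .
  have "(AA *v a) \<bullet> ((2 * p * F) *\<^sub>R g + (p * p * D) *\<^sub>R a) - 2 * (p * p * F) * ((MM *v du) \<bullet> a)
      = (AA *v a) \<bullet> ((2 * p * F) *\<^sub>R g) + (AA *v a) \<bullet> ((p * p * D) *\<^sub>R a) + (- 2 * (p * p * F) * ((MM *v du) \<bullet> a))"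
    by (simp add: inner_add_right)
  also have "\<dots> \<le> t * K - \<theta> * t\<^sup>2"
  proof -
    have "t * K = t * (2 * norm (AA *v g)) + t * (2 * \<bar>p\<bar> * norm (MM *v du))"
      unfolding K_def by (rule distrib_left)
    then show ?thesis using T1 T2 T3 by linarith
  qed
  also have "\<dots> \<le> K\<^sup>2 / (4 * \<theta>)" by (rule sq_le_quad[OF \<theta>])
  finally show ?thesis by (simp add: K_def)
qed


lemma key:
  fixes \<Omega> :: "(real^'n::finite) set" and A M :: "real^'n \<Rightarrow> real^'n^'n"
    and c h u0 u \<phi> :: "real^'n \<Rightarrow> real" and Du0 Du :: "real^'n \<Rightarrow> real^'n"
    and \<phi>0 \<phi>1 :: "nat \<Rightarrow> real^'n \<Rightarrow> real" and lam \<theta> KA KM C0 C1 :: real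
  assumes \<Omega>o: "open \<Omega>" and \<Omega>b: "bounded \<Omega>"
    and Asym: "\<And>x. x \<in> \<Omega> \<Longrightarrow> transpose (A x) = A x"
    and \<theta>: "\<theta> > 0"
    and Aell: "\<And>x \<xi>. x \<in> \<Omega> \<Longrightarrow> \<theta> * (norm \<xi>)\<^sup>2 \<le> \<xi> \<bullet> (A x *v \<xi>)"
    and Abd: "\<And>x \<xi>. x \<in> \<Omega> \<Longrightarrow> norm (A x *v \<xi>) \<le> KA * norm \<xi>"
    and Am: "\<And>i j. (\<lambda>x. A x $ i $ j) \<in> borel_measurable (lebesgue_on \<Omega>)"
    and Msym: "\<And>x. x \<in> \<Omega> \<Longrightarrow> transpose (M x) = M x"
    and Mpsd: "\<And>x \<xi>. x \<in> \<Omega> \<Longrightarrow> 0 \<le> \<xi> \<bullet> (M x *v \<xi>)"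
    and Mbd: "\<And>x \<xi>. x \<in> \<Omega> \<Longrightarrow> norm (M x *v \<xi>) \<le> KM * norm \<xi>"
    and Mm: "\<And>i j. (\<lambda>x. M x $ i $ j) \<in> borel_measurable (lebesgue_on \<Omega>)"
    and cm: "c \<in> borel_measurable (lebesgue_on \<Omega>)"
    and cpi: "integrable (lebesgue_on \<Omega>) (pos_part c)"
    and cneg: "AE x in lebesgue_on \<Omega>. neg_part c x = 0"
    and hi: "integrable (lebesgue_on \<Omega>) h"
    and u0m: "u0 \<in> borel_measurable (lebesgue_on \<Omega>)" and u0b: "AE x in lebesgue_on \<Omega>. \<bar>u0 x\<bar> \<le> C0"
    and u0i: "integrable (lebesgue_on \<Omega>) (\<lambda>x. (u0 x)\<^sup>2)"
    and Du0m: "Du0 \<in> borel_measurable (lebesgue_on \<Omega>)"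
    and Du0i: "integrable (lebesgue_on \<Omega>) (\<lambda>x. (norm (Du0 x))\<^sup>2)"
    and t0: "\<And>k. test_fn \<Omega> (\<phi>0 k)"
    and l0: "(\<lambda>k. integral\<^sup>L (lebesgue_on \<Omega>) (\<lambda>x. (\<phi>0 k x - u0 x)\<^sup>2)) \<longlonglongrightarrow> 0"
    and g0: "(\<lambda>k. integral\<^sup>L (lebesgue_on \<Omega>) (\<lambda>x. (norm (grad (\<phi>0 k) x - Du0 x))\<^sup>2)) \<longlonglongrightarrow> 0"
    and um: "u \<in> borel_measurable (lebesgue_on \<Omega>)" and ub: "AE x in lebesgue_on \<Omega>. \<bar>u x\<bar> \<le> C1"
    and ui: "integrable (lebesgue_on \<Omega>) (\<lambda>x. (u x)\<^sup>2)"
    and Dum: "Du \<in> borel_measurable (lebesgue_on \<Omega>)"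
    and Dui: "integrable (lebesgue_on \<Omega>) (\<lambda>x. (norm (Du x))\<^sup>2)"
    and t1: "\<And>k. test_fn \<Omega> (\<phi>1 k)"
    and l1: "(\<lambda>k. integral\<^sup>L (lebesgue_on \<Omega>) (\<lambda>x. (\<phi>1 k x - u x)\<^sup>2)) \<longlonglongrightarrow> 0"
    and g1: "(\<lambda>k. integral\<^sup>L (lebesgue_on \<Omega>) (\<lambda>x. (norm (grad (\<phi>1 k) x - Du x))\<^sup>2)) \<longlonglongrightarrow> 0"
    and E0: "\<And>\<psi>. test_fn \<Omega> \<psi> \<Longrightarrow> integral\<^sup>L (lebesgue_on \<Omega>) (\<lambda>x. (A x *v Du0 x) \<bullet> grad \<psi> x)
         = integral\<^sup>L (lebesgue_on \<Omega>) (\<lambda>x. (c_lam 0 c x * u0 x + (M x *v Du0 x) \<bullet> Du0 x + h x) * \<psi> x)"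
    and E1: "\<And>\<psi>. test_fn \<Omega> \<psi> \<Longrightarrow> integral\<^sup>L (lebesgue_on \<Omega>) (\<lambda>x. (A x *v Du x) \<bullet> grad \<psi> x)
         = integral\<^sup>L (lebesgue_on \<Omega>) (\<lambda>x. (c_lam lam c x * u x + (M x *v Du x) \<bullet> Du x + h x) * \<psi> x)"
    and \<phi>t: "test_fn \<Omega> \<phi>"
    and uu0: "AE x in lebesgue_on \<Omega>. u0 x \<le> u x"
  shows "integrable (lebesgue_on \<Omega>) (\<lambda>x. pos_part c x * u x * (\<phi> x * \<phi> x * Ff (u x - u0 x))) \<and>
     lam * integral\<^sup>L (lebesgue_on \<Omega>) (\<lambda>x. pos_part c x * u x * (\<phi> x * \<phi> x * Ff (u x - u0 x)))
     \<le> integral\<^sup>L (lebesgue_on \<Omega>) (\<lambda>x. (2 * norm (A x *v grad \<phi> x) + 2 * \<bar>\<phi> x\<bar> * norm (M x *v Du0 x))\<^sup>2 / (4 * \<theta>))"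
proof -
  let ?\<mu> = "lebesgue_on \<Omega>"
  have \<Omega>s: "\<Omega> \<in> sets lebesgue" using lmeasurable_open[OF \<Omega>b \<Omega>o] by (simp add: fmeasurableD)
  have fin: "finite_measure ?\<mu>" by (rule finite_measure_lebesgue_on[OF lmeasurable_open[OF \<Omega>b \<Omega>o]])
  have ic: "integrable ?\<mu> (\<lambda>x. K)" for K :: real by (rule finite_measure.integrable_const[OF fin])
  have tm: "f \<in> borel_measurable ?\<mu>" if "test_fn \<Omega> f" for f
    using meas_cont[OF smooth_cont \<Omega>s] that unfolding test_fn_def by blast
  have tgm: "grad f \<in> borel_measurable ?\<mu>" if "test_fn \<Omega> f" for f
    using meas_cont[OF smooth_grad_cont \<Omega>s] that unfolding test_fn_def by blast
  have tb: "\<exists>B. \<forall>x\<in>\<Omega>. \<bar>f x\<bar> \<le> B" if "test_fn \<Omega> f" for f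
    using bounded_on_closure[OF smooth_cont \<Omega>b, of f] that unfolding test_fn_def by auto
  have tgb: "\<exists>B. \<forall>x\<in>\<Omega>. norm (grad f x) \<le> B" if "test_fn \<Omega> f" for f
    using bounded_on_closure[OF smooth_grad_cont \<Omega>b, of f] that unfolding test_fn_def by auto
  have sqle: "(f::real)^2 \<le> B^2" if "\<bar>f\<bar> \<le> B" for f B
    using that by (metis abs_ge_zero abs_le_square_iff abs_of_nonneg order_trans power2_abs)
  have L2d: "integrable ?\<mu> (\<lambda>x. (f x - g x)\<^sup>2)"
    if tf: "test_fn \<Omega> f" and "g \<in> borel_measurable ?\<mu>" "integrable ?\<mu> (\<lambda>x. (g x)\<^sup>2)" for f g
  proof -
    obtain B where B: "\<forall>x\<in>\<Omega>. \<bar>f x\<bar> \<le> B" using tb[OF tf] by blast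
    have [measurable]: "f \<in> borel_measurable ?\<mu>" "g \<in> borel_measurable ?\<mu>" using tm[OF tf] that(2) by auto
    show ?thesis
    proof (rule intb[where g="\<lambda>x. 2*B^2 + 2*(g x)^2"])
      show "integrable ?\<mu> (\<lambda>x. 2*B^2 + 2*(g x)^2)" using ic that(3) by auto
      show "(\<lambda>x. (f x - g x)\<^sup>2) \<in> borel_measurable ?\<mu>" by measurable
      show "AE x in ?\<mu>. \<bar>(f x - g x)\<^sup>2\<bar> \<le> 2*B^2 + 2*(g x)^2"
      proof (rule AE_on)
        fix x assume "x \<in> \<Omega>"
        then have "(f x)^2 \<le> B^2" using B sqle by auto
        moreover have "(f x - g x)^2 \<le> 2*(f x)^2 + 2*(g x)^2" using L2_norm_diff_sq[of "f x" "g x"] by simp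
        ultimately show "\<bar>(f x - g x)\<^sup>2\<bar> \<le> 2*B^2 + 2*(g x)^2" by simp
      qed
    qed
  qed
  have L2dv: "integrable ?\<mu> (\<lambda>x. (norm (grad f x - G x))\<^sup>2)"
    if tf: "test_fn \<Omega> f" and "G \<in> borel_measurable ?\<mu>" "integrable ?\<mu> (\<lambda>x. (norm (G x))\<^sup>2)" for f and G :: "real^'n \<Rightarrow> real^'n"
  proof -
    obtain B where B: "\<forall>x\<in>\<Omega>. norm (grad f x) \<le> B" using tgb[OF tf] by blast
    have [measurable]: "grad f \<in> borel_measurable ?\<mu>" "G \<in> borel_measurable ?\<mu>" using tgm[OF tf] that(2) by auto
    show ?thesis
    proof (rule intb[where g="\<lambda>x. 2*B^2 + 2*(norm (G x))^2"])
      show "integrable ?\<mu> (\<lambda>x. 2*B^2 + 2*(norm (G x))^2)" using ic that(3) by auto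
      show "(\<lambda>x. (norm (grad f x - G x))\<^sup>2) \<in> borel_measurable ?\<mu>" by measurable
      show "AE x in ?\<mu>. \<bar>(norm (grad f x - G x))\<^sup>2\<bar> \<le> 2*B^2 + 2*(norm (G x))^2"
      proof (rule AE_on)
        fix x assume "x \<in> \<Omega>"
        then have "(norm (grad f x))^2 \<le> B^2" using B sqle[of "norm (grad f x)" B] by auto
        moreover have "(norm (grad f x - G x))^2 \<le> 2*(norm (grad f x))^2 + 2*(norm (G x))^2"
          by (rule L2_norm_diff_sq)
        ultimately show "\<bar>(norm (grad f x - G x))\<^sup>2\<bar> \<le> 2*B^2 + 2*(norm (G x))^2" by simp
      qed
    qed
  qed
  obtain r1 where r1: "strict_mono r1" "AE x in ?\<mu>. (\<lambda>k. \<phi>1 (r1 k) x) \<longlonglongrightarrow> u x"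
    using AE_subseq_L2[of ?\<mu> \<phi>1 u] L2d[OF t1 um ui] l1 by blast
  have l0': "(\<lambda>k. integral\<^sup>L ?\<mu> (\<lambda>x. (\<phi>0 (r1 k) x - u0 x)\<^sup>2)) \<longlonglongrightarrow> 0"
    using LIMSEQ_subseq_LIMSEQ[OF l0 r1(1)] by (simp add: o_def)
  obtain r2 where r2: "strict_mono r2" "AE x in ?\<mu>. (\<lambda>k. \<phi>0 (r1 (r2 k)) x) \<longlonglongrightarrow> u0 x"
    using AE_subseq_L2[of ?\<mu> "\<lambda>k. \<phi>0 (r1 k)" u0] L2d[OF t0 u0m u0i] l0' by blast
  define s where "s = r1 \<circ> r2"
  have s: "strict_mono s" unfolding s_def using r1(1) r2(1) by (rule strict_mono_o)
  have c1: "AE x in ?\<mu>. (\<lambda>k. \<phi>1 (s k) x) \<longlonglongrightarrow> u x"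
    using r1(2) by eventually_elim (use LIMSEQ_subseq_LIMSEQ[OF _ r2(1)] in \<open>auto simp: s_def o_def\<close>)
  have c0: "AE x in ?\<mu>. (\<lambda>k. \<phi>0 (s k) x) \<longlonglongrightarrow> u0 x"
    using r2(2) by (simp add: s_def o_def)
  have g1s: "(\<lambda>k. integral\<^sup>L ?\<mu> (\<lambda>x. (norm (grad (\<phi>1 (s k)) x - Du x))\<^sup>2)) \<longlonglongrightarrow> 0"
    using LIMSEQ_subseq_LIMSEQ[OF g1 s] by (simp add: o_def)
  have g0s: "(\<lambda>k. integral\<^sup>L ?\<mu> (\<lambda>x. (norm (grad (\<phi>0 (s k)) x - Du0 x))\<^sup>2)) \<longlonglongrightarrow> 0"
    using LIMSEQ_subseq_LIMSEQ[OF g0 s] by (simp add: o_def)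
  define w where "w k x = \<phi>1 (s k) x - \<phi>0 (s k) x" for k x
  define v where "v x = u x - u0 x" for x
  define Dv where "Dv x = Du x - Du0 x" for x
  define gw where "gw k x = grad (\<phi>1 (s k)) x - grad (\<phi>0 (s k)) x" for k x
  define psk where "psk k = psiF \<phi> (w k)" for k
  define ps where "ps x = \<phi> x * \<phi> x * Ff (v x)" for x
  define Dps where "Dps x = (2 * \<phi> x * Ff (v x)) *\<^sub>R grad \<phi> x + (\<phi> x * \<phi> x * Fd (v x)) *\<^sub>R Dv x" for x
  have sm1: "smooth_fn (\<phi>1 k)" "smooth_fn (\<phi>0 k)" "smooth_fn \<phi>" for k using t1 t0 \<phi>t unfolding test_fn_def by auto
  have ws: "smooth_fn (w k)" for k unfolding w_def[abs_def] by (intro smooth_diff sm1)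
  have pst: "test_fn \<Omega> (psk k)" for k unfolding psk_def using test_psiF[OF \<phi>t ws] .
  have gpsk: "grad (psk k) x = (2 * \<phi> x * Ff (w k x)) *\<^sub>R grad \<phi> x + (\<phi> x * \<phi> x * Fd (w k x)) *\<^sub>R gw k x" for k x
  proof -
    have "grad (w k) x = gw k x" unfolding w_def[abs_def] gw_def
      by (intro grad_diff smooth_diffble sm1)
    then show ?thesis unfolding psk_def by (simp add: grad_psiF[OF smooth_diffble[OF sm1(3)] smooth_diffble[OF ws]])
  qed
  have wl: "AE x in ?\<mu>. (\<lambda>k. w k x) \<longlonglongrightarrow> v x"
    using c1 c0 by eventually_elim (simp add: w_def v_def tendsto_diff)
  obtain B where B: "\<forall>x\<in>\<Omega>. \<bar>\<phi> x\<bar> \<le> B" using tb[OF \<phi>t] by blast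
  obtain Bg where Bg: "\<forall>x\<in>\<Omega>. norm (grad \<phi> x) \<le> Bg" using tgb[OF \<phi>t] by blast
  have [measurable]: "Ff \<in> borel_measurable borel" "Fd \<in> borel_measurable borel"
    using borel_measurable_continuous_onI cont_Ff cont_Fd by blast+
  have [measurable]: "\<phi> \<in> borel_measurable ?\<mu>" "grad \<phi> \<in> borel_measurable ?\<mu>" using tm[OF \<phi>t] tgm[OF \<phi>t] by auto
  have [measurable]: "\<phi>1 k \<in> borel_measurable ?\<mu>" "\<phi>0 k \<in> borel_measurable ?\<mu>"
    "grad (\<phi>1 k) \<in> borel_measurable ?\<mu>" "grad (\<phi>0 k) \<in> borel_measurable ?\<mu>" for k
    using tm[OF t1] tm[OF t0] tgm[OF t1] tgm[OF t0] by auto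
  have [measurable]: "u \<in> borel_measurable ?\<mu>" "u0 \<in> borel_measurable ?\<mu>" "Du \<in> borel_measurable ?\<mu>"
    "Du0 \<in> borel_measurable ?\<mu>" "c \<in> borel_measurable ?\<mu>" using um u0m Dum Du0m cm by auto
  have hm [measurable]: "h \<in> borel_measurable ?\<mu>" using hi by auto
  have [measurable]: "w k \<in> borel_measurable ?\<mu>" "gw k \<in> borel_measurable ?\<mu>" for k
    unfolding w_def[abs_def] gw_def[abs_def] by measurable
  have [measurable]: "v \<in> borel_measurable ?\<mu>" "Dv \<in> borel_measurable ?\<mu>"
    unfolding v_def[abs_def] Dv_def[abs_def] by measurable
  have [measurable]: "psk k \<in> borel_measurable ?\<mu>" "grad (psk k) \<in> borel_measurable ?\<mu>" for k
    using tm[OF pst] tgm[OF pst] by auto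
  have [measurable]: "ps \<in> borel_measurable ?\<mu>" "Dps \<in> borel_measurable ?\<mu>"
    unfolding ps_def[abs_def] Dps_def[abs_def] by measurable
  have [measurable]: "(\<lambda>x. A x *v Du x) \<in> borel_measurable ?\<mu>" "(\<lambda>x. A x *v Du0 x) \<in> borel_measurable ?\<mu>"
    "(\<lambda>x. A x *v grad \<phi> x) \<in> borel_measurable ?\<mu>" "(\<lambda>x. A x *v Dv x) \<in> borel_measurable ?\<mu>"
    "(\<lambda>x. M x *v Du x) \<in> borel_measurable ?\<mu>" "(\<lambda>x. M x *v Du0 x) \<in> borel_measurable ?\<mu>"
    "(\<lambda>x. M x *v Dv x) \<in> borel_measurable ?\<mu>"
    by (intro mat_vec_meas Am Mm; measurable)+
  have contFf: "isCont Ff t" for t using cont_Ff by (simp add: continuous_on_eq_continuous_at)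
  have contFd: "isCont Fd t" for t using cont_Fd by (simp add: continuous_on_eq_continuous_at)
  have Ffl: "AE x in ?\<mu>. (\<lambda>k. Ff (w k x)) \<longlonglongrightarrow> Ff (v x)"
    using wl by eventually_elim (rule isCont_tendsto_compose[OF contFf])
  have Fdl: "AE x in ?\<mu>. (\<lambda>k. Fd (w k x)) \<longlonglongrightarrow> Fd (v x)"
    using wl by eventually_elim (rule isCont_tendsto_compose[OF contFd])
  have m3: "\<bar>a\<bar> * \<bar>b\<bar> * c \<le> X * Y * Z" if "\<bar>a\<bar> \<le> X" "\<bar>b\<bar> \<le> Y" "0 \<le> c" "c \<le> Z" for a b c X Y Z :: real
    using that by (intro mult_mono) auto
  have nsq: "(norm z)\<^sup>2 \<le> X\<^sup>2" if "norm z \<le> X" for z :: "real^'n" and X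
    using that by (intro power_mono) auto
  have dFf: "\<bar>Ff a - Ff b\<bar> \<le> 1" for a b using Ff_pos[of a] Ff_pos[of b] Ff_le1[of a] Ff_le1[of b] by linarith
  have dFd: "\<bar>Fd a - Fd b\<bar> \<le> 4" for a b using Fd_bound[of a] Fd_bound[of b] by linarith
  have Dvi: "integrable ?\<mu> (\<lambda>x. (norm (Dv x))\<^sup>2)"
  proof (rule intb[where g="\<lambda>x. 2*(norm (Du x))^2 + 2*(norm (Du0 x))^2"])
    show "integrable ?\<mu> (\<lambda>x. 2*(norm (Du x))^2 + 2*(norm (Du0 x))^2)" using Dui Du0i by auto
    show "(\<lambda>x. (norm (Dv x))\<^sup>2) \<in> borel_measurable ?\<mu>" by measurable
    show "AE x in ?\<mu>. \<bar>(norm (Dv x))\<^sup>2\<bar> \<le> 2*(norm (Du x))^2 + 2*(norm (Du0 x))^2"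
      by (rule AE_I2) (simp add: Dv_def L2_norm_diff_sq)
  qed
  have gDi1: "integrable ?\<mu> (\<lambda>x. (norm (grad (\<phi>1 (s k)) x - Du x))\<^sup>2)" for k by (rule L2dv[OF t1 Dum Dui])
  have gDi0: "integrable ?\<mu> (\<lambda>x. (norm (grad (\<phi>0 (s k)) x - Du0 x))\<^sup>2)" for k by (rule L2dv[OF t0 Du0m Du0i])
  have gwb: "(norm (gw k x - Dv x))\<^sup>2 \<le> 2*(norm (grad (\<phi>1 (s k)) x - Du x))\<^sup>2 + 2*(norm (grad (\<phi>0 (s k)) x - Du0 x))\<^sup>2" for k x
  proof -
    have "gw k x - Dv x = (grad (\<phi>1 (s k)) x - Du x) - (grad (\<phi>0 (s k)) x - Du0 x)"
      by (simp add: gw_def Dv_def algebra_simps)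
    then show ?thesis using L2_norm_diff_sq by metis
  qed
  have gwi: "integrable ?\<mu> (\<lambda>x. (norm (gw k x - Dv x))\<^sup>2)" for k
  proof (rule intb[where g="\<lambda>x. 2*(norm (grad (\<phi>1 (s k)) x - Du x))\<^sup>2 + 2*(norm (grad (\<phi>0 (s k)) x - Du0 x))\<^sup>2"])
    show "integrable ?\<mu> (\<lambda>x. 2*(norm (grad (\<phi>1 (s k)) x - Du x))\<^sup>2 + 2*(norm (grad (\<phi>0 (s k)) x - Du0 x))\<^sup>2)"
      using gDi1 gDi0 by auto
    show "(\<lambda>x. (norm (gw k x - Dv x))\<^sup>2) \<in> borel_measurable ?\<mu>" by measurable
    show "AE x in ?\<mu>. \<bar>(norm (gw k x - Dv x))\<^sup>2\<bar>
        \<le> 2*(norm (grad (\<phi>1 (s k)) x - Du x))\<^sup>2 + 2*(norm (grad (\<phi>0 (s k)) x - Du0 x))\<^sup>2"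
      by (rule AE_I2) (simp add: gwb)
  qed
  have gwl: "(\<lambda>k. integral\<^sup>L ?\<mu> (\<lambda>x. (norm (gw k x - Dv x))\<^sup>2)) \<longlonglongrightarrow> 0"
  proof (rule tendsto_sandwich[where f="\<lambda>k. 0" and h="\<lambda>k. 2 * integral\<^sup>L ?\<mu> (\<lambda>x. (norm (grad (\<phi>1 (s k)) x - Du x))\<^sup>2)
        + 2 * integral\<^sup>L ?\<mu> (\<lambda>x. (norm (grad (\<phi>0 (s k)) x - Du0 x))\<^sup>2)"])
    show "\<forall>\<^sub>F k in sequentially. 0 \<le> integral\<^sup>L ?\<mu> (\<lambda>x. (norm (gw k x - Dv x))\<^sup>2)"
      by (intro always_eventually allI integral_nonneg_AE) auto
    show "\<forall>\<^sub>F k in sequentially. integral\<^sup>L ?\<mu> (\<lambda>x. (norm (gw k x - Dv x))\<^sup>2)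
       \<le> 2 * integral\<^sup>L ?\<mu> (\<lambda>x. (norm (grad (\<phi>1 (s k)) x - Du x))\<^sup>2)
        + 2 * integral\<^sup>L ?\<mu> (\<lambda>x. (norm (grad (\<phi>0 (s k)) x - Du0 x))\<^sup>2)"
    proof (intro always_eventually allI)
      fix k
      have "integral\<^sup>L ?\<mu> (\<lambda>x. (norm (gw k x - Dv x))\<^sup>2)
         \<le> integral\<^sup>L ?\<mu> (\<lambda>x. 2*(norm (grad (\<phi>1 (s k)) x - Du x))\<^sup>2 + 2*(norm (grad (\<phi>0 (s k)) x - Du0 x))\<^sup>2)"
        by (rule integral_mono[OF gwi]) (use gDi1 gDi0 gwb in auto)
      also have "\<dots> = 2 * integral\<^sup>L ?\<mu> (\<lambda>x. (norm (grad (\<phi>1 (s k)) x - Du x))\<^sup>2)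
        + 2 * integral\<^sup>L ?\<mu> (\<lambda>x. (norm (grad (\<phi>0 (s k)) x - Du0 x))\<^sup>2)"
        using gDi1 gDi0 by simp
      finally show "integral\<^sup>L ?\<mu> (\<lambda>x. (norm (gw k x - Dv x))\<^sup>2)
       \<le> 2 * integral\<^sup>L ?\<mu> (\<lambda>x. (norm (grad (\<phi>1 (s k)) x - Du x))\<^sup>2)
        + 2 * integral\<^sup>L ?\<mu> (\<lambda>x. (norm (grad (\<phi>0 (s k)) x - Du0 x))\<^sup>2)" .
    qed
    show "(\<lambda>k. 0) \<longlonglongrightarrow> (0::real)" by simp
    show "(\<lambda>k. 2 * integral\<^sup>L ?\<mu> (\<lambda>x. (norm (grad (\<phi>1 (s k)) x - Du x))\<^sup>2)
        + 2 * integral\<^sup>L ?\<mu> (\<lambda>x. (norm (grad (\<phi>0 (s k)) x - Du0 x))\<^sup>2)) \<longlonglongrightarrow> 0"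
      using tendsto_add[OF tendsto_mult_right_zero[OF g1s] tendsto_mult_right_zero[OF g0s]] by simp
  qed
  define d1 where "d1 k x = (2 * \<phi> x * (Ff (w k x) - Ff (v x))) *\<^sub>R grad \<phi> x" for k x
  define d2 where "d2 k x = (\<phi> x * \<phi> x * (Fd (w k x) - Fd (v x))) *\<^sub>R Dv x" for k x
  define d3 where "d3 k x = (\<phi> x * \<phi> x * Fd (w k x)) *\<^sub>R (gw k x - Dv x)" for k x
  have [measurable]: "d1 k \<in> borel_measurable ?\<mu>" "d2 k \<in> borel_measurable ?\<mu>" "d3 k \<in> borel_measurable ?\<mu>" for k
    unfolding d1_def[abs_def] d2_def[abs_def] d3_def[abs_def] by measurable
  have dd: "grad (psk k) x - Dps x = d1 k x + d2 k x + d3 k x" for k x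
    unfolding gpsk Dps_def d1_def d2_def d3_def by (simp add: algebra_simps)
  have pp: "\<bar>\<phi> x * \<phi> x\<bar> \<le> B\<^sup>2" if "x \<in> \<Omega>" for x
    using sqle[of "\<phi> x" B] B that by (simp add: power2_eq_square)
  have d1b: "(norm (d1 k x))\<^sup>2 \<le> (2 * B * Bg)\<^sup>2" if "x \<in> \<Omega>" for k x
  proof -
    have "norm (d1 k x) = \<bar>2 * \<phi> x\<bar> * \<bar>Ff (w k x) - Ff (v x)\<bar> * norm (grad \<phi> x)"
      by (simp add: d1_def abs_mult)
    also have "\<dots> \<le> (2 * B) * 1 * Bg" using B Bg that dFf by (intro m3) auto
    finally show ?thesis by (intro nsq) simp
  qed
  have d2b: "(norm (d2 k x))\<^sup>2 \<le> B ^ 4 * 16 * (norm (Dv x))\<^sup>2" if "x \<in> \<Omega>" for k x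
  proof -
    have "norm (d2 k x) = \<bar>\<phi> x * \<phi> x\<bar> * \<bar>Fd (w k x) - Fd (v x)\<bar> * norm (Dv x)"
      by (simp add: d2_def abs_mult)
    also have "\<dots> \<le> B\<^sup>2 * 4 * norm (Dv x)" using pp[OF that] dFd by (intro m3) auto
    finally have "(norm (d2 k x))\<^sup>2 \<le> (B\<^sup>2 * 4 * norm (Dv x))\<^sup>2" by (intro power_mono) auto
    also have "(B\<^sup>2 * 4 * norm (Dv x))\<^sup>2 = B ^ 4 * 16 * (norm (Dv x))\<^sup>2"
      by (simp add: power2_eq_square power4_eq_xxxx)
    finally show ?thesis .
  qed
  have d3b: "(norm (d3 k x))\<^sup>2 \<le> B ^ 4 * 4 * (norm (gw k x - Dv x))\<^sup>2" if "x \<in> \<Omega>" for k x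
  proof -
    have "norm (d3 k x) = \<bar>\<phi> x * \<phi> x\<bar> * \<bar>Fd (w k x)\<bar> * norm (gw k x - Dv x)"
      by (simp add: d3_def abs_mult)
    also have "\<dots> \<le> B\<^sup>2 * 2 * norm (gw k x - Dv x)" using pp[OF that] Fd_bound by (intro m3) auto
    finally have "(norm (d3 k x))\<^sup>2 \<le> (B\<^sup>2 * 2 * norm (gw k x - Dv x))\<^sup>2" by (intro power_mono) auto
    also have "(B\<^sup>2 * 2 * norm (gw k x - Dv x))\<^sup>2 = B ^ 4 * 4 * (norm (gw k x - Dv x))\<^sup>2"
      by (simp add: power2_eq_square power4_eq_xxxx)
    finally show ?thesis .
  qed
  have d1i: "integrable ?\<mu> (\<lambda>x. (norm (d1 k x))\<^sup>2)" for k
    by (rule intb[OF ic]) (auto intro!: AE_on d1b)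
  have d2i: "integrable ?\<mu> (\<lambda>x. (norm (d2 k x))\<^sup>2)" for k
    by (rule intb[where g="\<lambda>x. B ^ 4 * 16 * (norm (Dv x))\<^sup>2"]) (use Dvi in \<open>auto intro!: AE_on d2b\<close>)
  have d3i: "integrable ?\<mu> (\<lambda>x. (norm (d3 k x))\<^sup>2)" for k
    by (rule intb[where g="\<lambda>x. B ^ 4 * 4 * (norm (gw k x - Dv x))\<^sup>2"]) (use gwi in \<open>auto intro!: AE_on d3b\<close>)
  have d1l: "(\<lambda>k. integral\<^sup>L ?\<mu> (\<lambda>x. (norm (d1 k x))\<^sup>2)) \<longlonglongrightarrow> 0"
  proof (rule dct0[where w="\<lambda>x. (2 * B * Bg)\<^sup>2"])
    show "AE x in ?\<mu>. (\<lambda>k. (norm (d1 k x))\<^sup>2) \<longlonglongrightarrow> 0"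
      using Ffl
    proof eventually_elim
      case (elim x)
      have "(\<lambda>k. (norm ((2 * \<phi> x * (Ff (w k x) - Ff (v x))) *\<^sub>R grad \<phi> x))\<^sup>2)
         \<longlonglongrightarrow> (norm ((2 * \<phi> x * (Ff (v x) - Ff (v x))) *\<^sub>R grad \<phi> x))\<^sup>2"
        by (intro tendsto_intros elim)
      then show ?case by (simp add: d1_def)
    qed
    show "AE x in ?\<mu>. \<bar>(norm (d1 k x))\<^sup>2\<bar> \<le> (2 * B * Bg)\<^sup>2" for k by (auto intro!: AE_on d1b)
  qed (auto intro: ic)
  have d2l: "(\<lambda>k. integral\<^sup>L ?\<mu> (\<lambda>x. (norm (d2 k x))\<^sup>2)) \<longlonglongrightarrow> 0"
  proof (rule dct0[where w="\<lambda>x. B ^ 4 * 16 * (norm (Dv x))\<^sup>2"])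
    show "AE x in ?\<mu>. (\<lambda>k. (norm (d2 k x))\<^sup>2) \<longlonglongrightarrow> 0"
      using Fdl
    proof eventually_elim
      case (elim x)
      have "(\<lambda>k. (norm ((\<phi> x * \<phi> x * (Fd (w k x) - Fd (v x))) *\<^sub>R Dv x))\<^sup>2)
         \<longlonglongrightarrow> (norm ((\<phi> x * \<phi> x * (Fd (v x) - Fd (v x))) *\<^sub>R Dv x))\<^sup>2"
        by (intro tendsto_intros elim)
      then show ?case by (simp add: d2_def)
    qed
    show "AE x in ?\<mu>. \<bar>(norm (d2 k x))\<^sup>2\<bar> \<le> B ^ 4 * 16 * (norm (Dv x))\<^sup>2" for k by (auto intro!: AE_on d2b)
  qed (use Dvi in auto)
  have d3l: "(\<lambda>k. integral\<^sup>L ?\<mu> (\<lambda>x. (norm (d3 k x))\<^sup>2)) \<longlonglongrightarrow> 0"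
  proof (rule tendsto_sandwich[where f="\<lambda>k. 0" and h="\<lambda>k. (B ^ 4 * 4) * integral\<^sup>L ?\<mu> (\<lambda>x. (norm (gw k x - Dv x))\<^sup>2)"])
    show "\<forall>\<^sub>F k in sequentially. 0 \<le> integral\<^sup>L ?\<mu> (\<lambda>x. (norm (d3 k x))\<^sup>2)"
      by (intro always_eventually allI integral_nonneg_AE) auto
    show "\<forall>\<^sub>F k in sequentially. integral\<^sup>L ?\<mu> (\<lambda>x. (norm (d3 k x))\<^sup>2)
        \<le> (B ^ 4 * 4) * integral\<^sup>L ?\<mu> (\<lambda>x. (norm (gw k x - Dv x))\<^sup>2)"
    proof (intro always_eventually allI)
      fix k
      have "integral\<^sup>L ?\<mu> (\<lambda>x. (norm (d3 k x))\<^sup>2) \<le> integral\<^sup>L ?\<mu> (\<lambda>x. B ^ 4 * 4 * (norm (gw k x - Dv x))\<^sup>2)"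
        by (rule integral_mono_AE[OF d3i]) (use gwi in \<open>auto intro!: AE_on d3b\<close>)
      then show "integral\<^sup>L ?\<mu> (\<lambda>x. (norm (d3 k x))\<^sup>2)
        \<le> (B ^ 4 * 4) * integral\<^sup>L ?\<mu> (\<lambda>x. (norm (gw k x - Dv x))\<^sup>2)" by simp
    qed
    show "(\<lambda>k. 0) \<longlonglongrightarrow> (0::real)" by simp
    show "(\<lambda>k. (B ^ 4 * 4) * integral\<^sup>L ?\<mu> (\<lambda>x. (norm (gw k x - Dv x))\<^sup>2)) \<longlonglongrightarrow> 0"
      using tendsto_mult_right_zero[OF gwl] by simp
  qed
  have gpb: "(norm (grad (psk k) x - Dps x))\<^sup>2 \<le> 3 * ((norm (d1 k x))\<^sup>2 + (norm (d2 k x))\<^sup>2 + (norm (d3 k x))\<^sup>2)" for k x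
    unfolding dd by (rule sq3)
  have gpi: "integrable ?\<mu> (\<lambda>x. (norm (grad (psk k) x - Dps x))\<^sup>2)" for k
    by (rule intb[where g="\<lambda>x. 3 * ((norm (d1 k x))\<^sup>2 + (norm (d2 k x))\<^sup>2 + (norm (d3 k x))\<^sup>2)"])
       (use d1i d2i d3i gpb in auto)
  have gpl: "(\<lambda>k. integral\<^sup>L ?\<mu> (\<lambda>x. (norm (grad (psk k) x - Dps x))\<^sup>2)) \<longlonglongrightarrow> 0"
  proof (rule tendsto_sandwich[where f="\<lambda>k. 0" and h="\<lambda>k. 3 * (integral\<^sup>L ?\<mu> (\<lambda>x. (norm (d1 k x))\<^sup>2)
       + integral\<^sup>L ?\<mu> (\<lambda>x. (norm (d2 k x))\<^sup>2) + integral\<^sup>L ?\<mu> (\<lambda>x. (norm (d3 k x))\<^sup>2))"])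
    show "\<forall>\<^sub>F k in sequentially. 0 \<le> integral\<^sup>L ?\<mu> (\<lambda>x. (norm (grad (psk k) x - Dps x))\<^sup>2)"
      by (intro always_eventually allI integral_nonneg_AE) auto
    show "\<forall>\<^sub>F k in sequentially. integral\<^sup>L ?\<mu> (\<lambda>x. (norm (grad (psk k) x - Dps x))\<^sup>2)
       \<le> 3 * (integral\<^sup>L ?\<mu> (\<lambda>x. (norm (d1 k x))\<^sup>2)
       + integral\<^sup>L ?\<mu> (\<lambda>x. (norm (d2 k x))\<^sup>2) + integral\<^sup>L ?\<mu> (\<lambda>x. (norm (d3 k x))\<^sup>2))"
    proof (intro always_eventually allI)
      fix k
      have "integral\<^sup>L ?\<mu> (\<lambda>x. (norm (grad (psk k) x - Dps x))\<^sup>2)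
          \<le> integral\<^sup>L ?\<mu> (\<lambda>x. 3 * ((norm (d1 k x))\<^sup>2 + (norm (d2 k x))\<^sup>2 + (norm (d3 k x))\<^sup>2))"
        by (rule integral_mono[OF gpi]) (use d1i d2i d3i gpb in auto)
      also have "\<dots> = 3 * (integral\<^sup>L ?\<mu> (\<lambda>x. (norm (d1 k x))\<^sup>2)
       + integral\<^sup>L ?\<mu> (\<lambda>x. (norm (d2 k x))\<^sup>2) + integral\<^sup>L ?\<mu> (\<lambda>x. (norm (d3 k x))\<^sup>2))"
        using d1i d2i d3i by simp
      finally show "integral\<^sup>L ?\<mu> (\<lambda>x. (norm (grad (psk k) x - Dps x))\<^sup>2)
       \<le> 3 * (integral\<^sup>L ?\<mu> (\<lambda>x. (norm (d1 k x))\<^sup>2)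
       + integral\<^sup>L ?\<mu> (\<lambda>x. (norm (d2 k x))\<^sup>2) + integral\<^sup>L ?\<mu> (\<lambda>x. (norm (d3 k x))\<^sup>2))" .
    qed
    show "(\<lambda>k. 0) \<longlonglongrightarrow> (0::real)" by simp
    show "(\<lambda>k. 3 * (integral\<^sup>L ?\<mu> (\<lambda>x. (norm (d1 k x))\<^sup>2)
       + integral\<^sup>L ?\<mu> (\<lambda>x. (norm (d2 k x))\<^sup>2) + integral\<^sup>L ?\<mu> (\<lambda>x. (norm (d3 k x))\<^sup>2))) \<longlonglongrightarrow> 0"
      using tendsto_mult_right_zero[OF tendsto_add_zero[OF tendsto_add_zero[OF d1l d2l] d3l], of 3]
      by (simp only:)
  qed
  have Aq: "(norm (A x *v z))\<^sup>2 \<le> KA\<^sup>2 * (norm z)\<^sup>2" if "x \<in> \<Omega>" for x z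
  proof -
    have "(norm (A x *v z))\<^sup>2 \<le> (KA * norm z)\<^sup>2" by (rule power_mono[OF Abd[OF that]]) simp
    then show ?thesis by (simp add: power_mult_distrib)
  qed
  have Mq: "\<bar>(M x *v z) \<bullet> z\<bar> \<le> KM * (norm z)\<^sup>2" if "x \<in> \<Omega>" for x z
  proof -
    have "\<bar>(M x *v z) \<bullet> z\<bar> \<le> norm (M x *v z) * norm z" by (rule Cauchy_Schwarz_ineq2)
    also have "\<dots> \<le> KM * norm z * norm z" by (rule mult_right_mono[OF Mbd[OF that]]) simp
    finally show ?thesis by (simp add: power2_eq_square mult.assoc)
  qed
  have ADi: "integrable ?\<mu> (\<lambda>x. (norm (A x *v Du x))\<^sup>2)"
  proof (rule intb[where g="\<lambda>x. KA\<^sup>2 * (norm (Du x))\<^sup>2"])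
    show "integrable ?\<mu> (\<lambda>x. KA\<^sup>2 * (norm (Du x))\<^sup>2)" using Dui by auto
    show "(\<lambda>x. (norm (A x *v Du x))\<^sup>2) \<in> borel_measurable ?\<mu>" by measurable
    show "AE x in ?\<mu>. \<bar>(norm (A x *v Du x))\<^sup>2\<bar> \<le> KA\<^sup>2 * (norm (Du x))\<^sup>2"
      by (rule AE_on) (use Aq in simp)
  qed
  have AD0i: "integrable ?\<mu> (\<lambda>x. (norm (A x *v Du0 x))\<^sup>2)"
  proof (rule intb[where g="\<lambda>x. KA\<^sup>2 * (norm (Du0 x))\<^sup>2"])
    show "integrable ?\<mu> (\<lambda>x. KA\<^sup>2 * (norm (Du0 x))\<^sup>2)" using Du0i by auto
    show "(\<lambda>x. (norm (A x *v Du0 x))\<^sup>2) \<in> borel_measurable ?\<mu>" by measurable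
    show "AE x in ?\<mu>. \<bar>(norm (A x *v Du0 x))\<^sup>2\<bar> \<le> KA\<^sup>2 * (norm (Du0 x))\<^sup>2"
      by (rule AE_on) (use Aq in simp)
  qed
  have Dpsb: "(norm (Dps x))\<^sup>2 \<le> 2 * (2 * B * Bg)\<^sup>2 + 2 * ((B\<^sup>2 * 2)\<^sup>2 * (norm (Dv x))\<^sup>2)" if "x \<in> \<Omega>" for x
  proof -
    have e1: "norm ((2 * \<phi> x * Ff (v x)) *\<^sub>R grad \<phi> x) \<le> 2 * B * Bg"
    proof -
      have "norm ((2 * \<phi> x * Ff (v x)) *\<^sub>R grad \<phi> x) = \<bar>2 * \<phi> x\<bar> * \<bar>Ff (v x)\<bar> * norm (grad \<phi> x)"
        by (simp add: abs_mult)
      also have "\<dots> \<le> (2 * B) * 1 * Bg" using B Bg that Ff_pos[of "v x"] Ff_le1[of "v x"] by (intro m3) auto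
      finally show ?thesis by simp
    qed
    have e2: "norm ((\<phi> x * \<phi> x * Fd (v x)) *\<^sub>R Dv x) \<le> B\<^sup>2 * 2 * norm (Dv x)"
    proof -
      have "norm ((\<phi> x * \<phi> x * Fd (v x)) *\<^sub>R Dv x) = \<bar>\<phi> x * \<phi> x\<bar> * \<bar>Fd (v x)\<bar> * norm (Dv x)"
        by (simp add: abs_mult)
      also have "\<dots> \<le> B\<^sup>2 * 2 * norm (Dv x)" using pp[OF that] Fd_bound by (intro m3) auto
      finally show ?thesis .
    qed
    have "(norm (Dps x))\<^sup>2 \<le> 2 * (norm ((2 * \<phi> x * Ff (v x)) *\<^sub>R grad \<phi> x))\<^sup>2 + 2 * (norm ((\<phi> x * \<phi> x * Fd (v x)) *\<^sub>R Dv x))\<^sup>2"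
      using L2_norm_diff_sq[of "(2 * \<phi> x * Ff (v x)) *\<^sub>R grad \<phi> x" "- ((\<phi> x * \<phi> x * Fd (v x)) *\<^sub>R Dv x)"]
      by (simp add: Dps_def)
    also have "\<dots> \<le> 2 * (2 * B * Bg)\<^sup>2 + 2 * (B\<^sup>2 * 2 * norm (Dv x))\<^sup>2"
      using e1 e2 by (intro add_mono mult_left_mono power_mono) auto
    also have "(B\<^sup>2 * 2 * norm (Dv x))\<^sup>2 = (B\<^sup>2 * 2)\<^sup>2 * (norm (Dv x))\<^sup>2" by (simp add: power_mult_distrib)
    finally show ?thesis .
  qed
  have Dpsi: "integrable ?\<mu> (\<lambda>x. (norm (Dps x))\<^sup>2)"
  proof (rule intb[where g="\<lambda>x. 2 * (2 * B * Bg)\<^sup>2 + 2 * ((B\<^sup>2 * 2)\<^sup>2 * (norm (Dv x))\<^sup>2)"])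
    show "integrable ?\<mu> (\<lambda>x. 2 * (2 * B * Bg)\<^sup>2 + 2 * ((B\<^sup>2 * 2)\<^sup>2 * (norm (Dv x))\<^sup>2))"
      using Dvi ic by (intro Bochner_Integration.integrable_add integrable_mult_right) auto
    show "(\<lambda>x. (norm (Dps x))\<^sup>2) \<in> borel_measurable ?\<mu>" by measurable
    show "AE x in ?\<mu>. \<bar>(norm (Dps x))\<^sup>2\<bar> \<le> 2 * (2 * B * Bg)\<^sup>2 + 2 * ((B\<^sup>2 * 2)\<^sup>2 * (norm (Dv x))\<^sup>2)"
      by (rule AE_on) (use Dpsb in simp)
  qed
  have pskb: "AE x in ?\<mu>. \<bar>psk k x\<bar> \<le> B\<^sup>2" for k
  proof (rule AE_on)
    fix x assume x: "x \<in> \<Omega>"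
    have "\<bar>psk k x\<bar> = \<bar>\<phi> x * \<phi> x\<bar> * \<bar>Ff (w k x)\<bar> * 1" by (simp add: psk_def psiF_def abs_mult)
    also have "\<dots> \<le> B\<^sup>2 * 1 * 1" using pp[OF x] Ff_pos[of "w k x"] Ff_le1[of "w k x"] by (intro m3) auto
    finally show "\<bar>psk k x\<bar> \<le> B\<^sup>2" by simp
  qed
  have pskl: "AE x in ?\<mu>. (\<lambda>k. psk k x) \<longlonglongrightarrow> ps x"
    using Ffl by eventually_elim (auto simp: psk_def psiF_def ps_def intro!: tendsto_intros)
  define R1 where "R1 x = c_lam lam c x * u x + (M x *v Du x) \<bullet> Du x + h x" for x
  define R0 where "R0 x = c_lam 0 c x * u0 x + (M x *v Du0 x) \<bullet> Du0 x + h x" for x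
  have [measurable]: "R1 \<in> borel_measurable ?\<mu>" "R0 \<in> borel_measurable ?\<mu>"
    unfolding R1_def[abs_def] R0_def[abs_def] c_lam_def pos_part_def neg_part_def by measurable
  have cpm [measurable]: "pos_part c \<in> borel_measurable ?\<mu>" using cpi by auto
  have R1i: "integrable ?\<mu> R1"
  proof (rule intb[where g="\<lambda>x. \<bar>lam\<bar> * C1 * pos_part c x + KM * (norm (Du x))\<^sup>2 + \<bar>h x\<bar>"])
    show "integrable ?\<mu> (\<lambda>x. \<bar>lam\<bar> * C1 * pos_part c x + KM * (norm (Du x))\<^sup>2 + \<bar>h x\<bar>)"
      using cpi Dui hi by auto
    show "R1 \<in> borel_measurable ?\<mu>" by measurable
    show "AE x in ?\<mu>. \<bar>R1 x\<bar> \<le> \<bar>lam\<bar> * C1 * pos_part c x + KM * (norm (Du x))\<^sup>2 + \<bar>h x\<bar>"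
      using cneg ub AE_space
    proof eventually_elim
      case (elim x)
      then have x: "x \<in> \<Omega>" by simp
      have cp0: "0 \<le> pos_part c x" by (simp add: pos_part_def)
      have "\<bar>c_lam lam c x * u x\<bar> = \<bar>lam\<bar> * pos_part c x * \<bar>u x\<bar>"
        using elim by (simp add: c_lam_def abs_mult cp0)
      also have "\<dots> \<le> \<bar>lam\<bar> * pos_part c x * C1" using elim cp0 by (intro mult_left_mono) auto
      finally have "\<bar>c_lam lam c x * u x\<bar> \<le> \<bar>lam\<bar> * C1 * pos_part c x" by (simp add: ac_simps)
      then show ?case using Mq[OF x, of "Du x"] unfolding R1_def by linarith
    qed
  qed
  have R0i: "integrable ?\<mu> R0"
  proof (rule intb[where g="\<lambda>x. KM * (norm (Du0 x))\<^sup>2 + \<bar>h x\<bar>"])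
    show "integrable ?\<mu> (\<lambda>x. KM * (norm (Du0 x))\<^sup>2 + \<bar>h x\<bar>)" using Du0i hi by auto
    show "R0 \<in> borel_measurable ?\<mu>" by measurable
    show "AE x in ?\<mu>. \<bar>R0 x\<bar> \<le> KM * (norm (Du0 x))\<^sup>2 + \<bar>h x\<bar>"
      using cneg AE_space
    proof eventually_elim
      case (elim x)
      then have x: "x \<in> \<Omega>" by simp
      have "c_lam 0 c x * u0 x = 0" using elim by (simp add: c_lam_def)
      then show ?case using Mq[OF x, of "Du0 x"] unfolding R0_def by linarith
    qed
  qed
  have I1: "integral\<^sup>L ?\<mu> (\<lambda>x. (A x *v Du x) \<bullet> Dps x) = integral\<^sup>L ?\<mu> (\<lambda>x. R1 x * ps x)"
  proof (rule pass_limit[where gk="\<lambda>k. grad (psk k)" and psik=psk and B="B\<^sup>2"])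
    show "integral\<^sup>L ?\<mu> (\<lambda>x. (A x *v Du x) \<bullet> grad (psk k) x) = integral\<^sup>L ?\<mu> (\<lambda>x. R1 x * psk k x)" for k
      using E1[OF pst[of k]] by (simp add: R1_def)
  qed (use ADi Dpsi gpi gpl R1i pskl pskb in auto)
  have I0: "integral\<^sup>L ?\<mu> (\<lambda>x. (A x *v Du0 x) \<bullet> Dps x) = integral\<^sup>L ?\<mu> (\<lambda>x. R0 x * ps x)"
  proof (rule pass_limit[where gk="\<lambda>k. grad (psk k)" and psik=psk and B="B\<^sup>2"])
    show "integral\<^sup>L ?\<mu> (\<lambda>x. (A x *v Du0 x) \<bullet> grad (psk k) x) = integral\<^sup>L ?\<mu> (\<lambda>x. R0 x * psk k x)" for k
      using E0[OF pst[of k]] by (simp add: R0_def)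
  qed (use AD0i Dpsi gpi gpl R0i pskl pskb in auto)
  have psb: "\<bar>ps x\<bar> \<le> B\<^sup>2" "0 \<le> ps x" if "x \<in> \<Omega>" for x
  proof -
    have "\<bar>ps x\<bar> = \<bar>\<phi> x * \<phi> x\<bar> * \<bar>Ff (v x)\<bar> * 1" by (simp add: ps_def abs_mult)
    also have "\<dots> \<le> B\<^sup>2 * 1 * 1" using pp[OF that] Ff_pos[of "v x"] Ff_le1[of "v x"] by (intro m3) auto
    finally show "\<bar>ps x\<bar> \<le> B\<^sup>2" by simp
    show "0 \<le> ps x" using Ff_pos[of "v x"] by (simp add: ps_def)
  qed
  have Rps: "integrable ?\<mu> (\<lambda>x. R x * ps x)" if Ri: "integrable ?\<mu> R" for R
  proof (rule intb[where g="\<lambda>x. B\<^sup>2 * \<bar>R x\<bar>"])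
    show "integrable ?\<mu> (\<lambda>x. B\<^sup>2 * \<bar>R x\<bar>)" using Ri by auto
    have [measurable]: "R \<in> borel_measurable ?\<mu>" using Ri by auto
    show "(\<lambda>x. R x * ps x) \<in> borel_measurable ?\<mu>" by measurable
    show "AE x in ?\<mu>. \<bar>R x * ps x\<bar> \<le> B\<^sup>2 * \<bar>R x\<bar>"
    proof (rule AE_on)
      fix x assume "x \<in> \<Omega>"
      then have "\<bar>R x\<bar> * \<bar>ps x\<bar> \<le> \<bar>R x\<bar> * B\<^sup>2" using psb by (intro mult_left_mono) auto
      then show "\<bar>R x * ps x\<bar> \<le> B\<^sup>2 * \<bar>R x\<bar>" by (simp add: abs_mult mult.commute)
    qed
  qed
  have R1p: "integrable ?\<mu> (\<lambda>x. R1 x * ps x)" and R0p: "integrable ?\<mu> (\<lambda>x. R0 x * ps x)"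
    using Rps[OF R1i] Rps[OF R0i] .
  have Mq2: "(norm (M x *v z))\<^sup>2 \<le> KM\<^sup>2 * (norm z)\<^sup>2" if "x \<in> \<Omega>" for x z
  proof -
    have "(norm (M x *v z))\<^sup>2 \<le> (KM * norm z)\<^sup>2" by (rule power_mono[OF Mbd[OF that]]) simp
    then show ?thesis by (simp add: power_mult_distrib)
  qed
  have MD0i: "integrable ?\<mu> (\<lambda>x. (norm (M x *v Du0 x))\<^sup>2)"
  proof (rule intb[where g="\<lambda>x. KM\<^sup>2 * (norm (Du0 x))\<^sup>2"])
    show "integrable ?\<mu> (\<lambda>x. KM\<^sup>2 * (norm (Du0 x))\<^sup>2)" using Du0i by auto
    show "(\<lambda>x. (norm (M x *v Du0 x))\<^sup>2) \<in> borel_measurable ?\<mu>" by measurable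
    show "AE x in ?\<mu>. \<bar>(norm (M x *v Du0 x))\<^sup>2\<bar> \<le> KM\<^sup>2 * (norm (Du0 x))\<^sup>2"
      by (rule AE_on) (use Mq2 in simp)
  qed
  have MDvi: "integrable ?\<mu> (\<lambda>x. (M x *v Du0 x) \<bullet> Dv x)"
    by (rule integrable_inner_L2[OF _ _ MD0i Dvi]) auto
  have MDvp: "integrable ?\<mu> (\<lambda>x. 2 * ps x * ((M x *v Du0 x) \<bullet> Dv x))"
  proof -
    have eq: "(\<lambda>x. 2 * ps x * ((M x *v Du0 x) \<bullet> Dv x)) = (\<lambda>x. 2 * (((M x *v Du0 x) \<bullet> Dv x) * ps x))"
      by (auto simp: fun_eq_iff ac_simps)
    show ?thesis unfolding eq using Rps[OF MDvi] by (rule integrable_mult_right)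
  qed
  have ADvi1: "integrable ?\<mu> (\<lambda>x. (A x *v Du x) \<bullet> Dps x)" by (rule integrable_inner_L2[OF _ _ ADi Dpsi]) auto
  have ADvi0: "integrable ?\<mu> (\<lambda>x. (A x *v Du0 x) \<bullet> Dps x)" by (rule integrable_inner_L2[OF _ _ AD0i Dpsi]) auto
  have ADv: "(A x *v Dv x) \<bullet> Dps x = (A x *v Du x) \<bullet> Dps x - (A x *v Du0 x) \<bullet> Dps x" for x
    by (simp add: Dv_def matrix_vector_mult_diff_distrib inner_diff_left)
  have ADvi: "integrable ?\<mu> (\<lambda>x. (A x *v Dv x) \<bullet> Dps x)" unfolding ADv using ADvi1 ADvi0 by auto
  have IADv: "integral\<^sup>L ?\<mu> (\<lambda>x. (A x *v Dv x) \<bullet> Dps x) = integral\<^sup>L ?\<mu> (\<lambda>x. (R1 x - R0 x) * ps x)"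
  proof -
    have "integral\<^sup>L ?\<mu> (\<lambda>x. (A x *v Dv x) \<bullet> Dps x)
        = integral\<^sup>L ?\<mu> (\<lambda>x. (A x *v Du x) \<bullet> Dps x) - integral\<^sup>L ?\<mu> (\<lambda>x. (A x *v Du0 x) \<bullet> Dps x)"
      unfolding ADv using ADvi1 ADvi0 by simp
    also have "\<dots> = integral\<^sup>L ?\<mu> (\<lambda>x. R1 x * ps x) - integral\<^sup>L ?\<mu> (\<lambda>x. R0 x * ps x)" using I1 I0 by simp
    also have "\<dots> = integral\<^sup>L ?\<mu> (\<lambda>x. (R1 x - R0 x) * ps x)"
      using R1p R0p by (simp add: left_diff_distrib)
    finally show ?thesis .
  qed
  define K2 where "K2 x = (2 * norm (A x *v grad \<phi> x) + 2 * \<bar>\<phi> x\<bar> * norm (M x *v Du0 x))\<^sup>2 / (4 * \<theta>)" for x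
  have [measurable]: "K2 \<in> borel_measurable ?\<mu>" unfolding K2_def[abs_def] by measurable
  have K2i: "integrable ?\<mu> K2"
  proof (rule intb[where g="\<lambda>x. (8 * (KA\<^sup>2 * Bg\<^sup>2) + 8 * (B\<^sup>2 * (KM\<^sup>2 * (norm (Du0 x))\<^sup>2))) / (4 * \<theta>)"])
    show "integrable ?\<mu> (\<lambda>x. (8 * (KA\<^sup>2 * Bg\<^sup>2) + 8 * (B\<^sup>2 * (KM\<^sup>2 * (norm (Du0 x))\<^sup>2))) / (4 * \<theta>))"
      using Du0i ic by (intro integrable_divide Bochner_Integration.integrable_add integrable_mult_right) auto
    show "K2 \<in> borel_measurable ?\<mu>" by measurable
    show "AE x in ?\<mu>. \<bar>K2 x\<bar> \<le> (8 * (KA\<^sup>2 * Bg\<^sup>2) + 8 * (B\<^sup>2 * (KM\<^sup>2 * (norm (Du0 x))\<^sup>2))) / (4 * \<theta>)"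
    proof (rule AE_on)
      fix x assume x: "x \<in> \<Omega>"
      have a: "(2 * norm (A x *v grad \<phi> x))\<^sup>2 \<le> 4 * (KA\<^sup>2 * Bg\<^sup>2)"
      proof -
        have "(norm (A x *v grad \<phi> x))\<^sup>2 \<le> KA\<^sup>2 * (norm (grad \<phi> x))\<^sup>2" by (rule Aq[OF x])
        also have "\<dots> \<le> KA\<^sup>2 * Bg\<^sup>2" using Bg x by (intro mult_left_mono power_mono) auto
        finally show ?thesis by (simp add: power_mult_distrib)
      qed
      have b: "(2 * \<bar>\<phi> x\<bar> * norm (M x *v Du0 x))\<^sup>2 \<le> 4 * (B\<^sup>2 * (KM\<^sup>2 * (norm (Du0 x))\<^sup>2))"
      proof -
        have "(\<phi> x)\<^sup>2 \<le> B\<^sup>2" using sqle B x by auto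
        moreover have "(norm (M x *v Du0 x))\<^sup>2 \<le> KM\<^sup>2 * (norm (Du0 x))\<^sup>2" by (rule Mq2[OF x])
        ultimately have "(\<phi> x)\<^sup>2 * (norm (M x *v Du0 x))\<^sup>2 \<le> B\<^sup>2 * (KM\<^sup>2 * (norm (Du0 x))\<^sup>2)"
          by (intro mult_mono) auto
        then show ?thesis by (simp add: power_mult_distrib)
      qed
      have "(2 * norm (A x *v grad \<phi> x) + 2 * \<bar>\<phi> x\<bar> * norm (M x *v Du0 x))\<^sup>2
          \<le> 2 * (2 * norm (A x *v grad \<phi> x))\<^sup>2 + 2 * (2 * \<bar>\<phi> x\<bar> * norm (M x *v Du0 x))\<^sup>2"
        using L2_norm_diff_sq[of "2 * norm (A x *v grad \<phi> x)" "- (2 * \<bar>\<phi> x\<bar> * norm (M x *v Du0 x))"] by simp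
      also have "\<dots> \<le> 8 * (KA\<^sup>2 * Bg\<^sup>2) + 8 * (B\<^sup>2 * (KM\<^sup>2 * (norm (Du0 x))\<^sup>2))" using a b by linarith
      finally have "4 * \<theta> * K2 x \<le> 8 * (KA\<^sup>2 * Bg\<^sup>2) + 8 * (B\<^sup>2 * (KM\<^sup>2 * (norm (Du0 x))\<^sup>2))"
        using \<theta> by (simp add: K2_def)
      moreover have "0 \<le> K2 x" using \<theta> by (simp add: K2_def)
      ultimately show "\<bar>K2 x\<bar> \<le> (8 * (KA\<^sup>2 * Bg\<^sup>2) + 8 * (B\<^sup>2 * (KM\<^sup>2 * (norm (Du0 x))\<^sup>2))) / (4 * \<theta>)"
        using \<theta> by (simp add: field_simps)
    qed
  qed
  have cups: "integrable ?\<mu> (\<lambda>x. pos_part c x * u x * ps x)"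
  proof (rule intb[where g="\<lambda>x. (C1 * B\<^sup>2) * pos_part c x"])
    show "integrable ?\<mu> (\<lambda>x. (C1 * B\<^sup>2) * pos_part c x)" using cpi by auto
    show "(\<lambda>x. pos_part c x * u x * ps x) \<in> borel_measurable ?\<mu>" by measurable
    show "AE x in ?\<mu>. \<bar>pos_part c x * u x * ps x\<bar> \<le> (C1 * B\<^sup>2) * pos_part c x"
      using ub AE_space
    proof eventually_elim
      case (elim x)
      then have x: "x \<in> \<Omega>" by simp
      have cp0: "0 \<le> pos_part c x" by (simp add: pos_part_def)
      have "\<bar>u x\<bar> * \<bar>ps x\<bar> \<le> C1 * B\<^sup>2" using elim psb[OF x] by (intro mult_mono) auto
      then have "pos_part c x * (\<bar>u x\<bar> * \<bar>ps x\<bar>) \<le> pos_part c x * (C1 * B\<^sup>2)" using cp0 by (intro mult_left_mono)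
      then show ?case using cp0 by (simp add: abs_mult ac_simps)
    qed
  qed
  have P1: "AE x in ?\<mu>. lam * (pos_part c x * u x * ps x) \<le> (R1 x - R0 x) * ps x - 2 * ps x * ((M x *v Du0 x) \<bullet> Dv x)"
    using cneg AE_space
  proof eventually_elim
    case (elim x)
    then have x: "x \<in> \<Omega>" by simp
    have e: "(M x *v Du x) \<bullet> Du x - (M x *v Du0 x) \<bullet> Du0 x = (M x *v Dv x) \<bullet> Dv x + 2 * ((M x *v Du0 x) \<bullet> Dv x)"
    proof -
      have d: "Du x = Du0 x + Dv x" by (simp add: Dv_def)
      have sy: "(M x *v Dv x) \<bullet> Du0 x = (M x *v Du0 x) \<bullet> Dv x"
        using sym_inner[OF Msym[OF x], of "Du0 x" "Dv x"] by (simp add: inner_commute)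
      show ?thesis unfolding d by (simp add: matrix_vector_right_distrib inner_add_left inner_add_right sy)
    qed
    have "R1 x - R0 x = lam * pos_part c x * u x + ((M x *v Dv x) \<bullet> Dv x + 2 * ((M x *v Du0 x) \<bullet> Dv x))"
      using elim e by (simp add: R1_def R0_def c_lam_def)
    then have "(R1 x - R0 x) * ps x - 2 * ps x * ((M x *v Du0 x) \<bullet> Dv x)
        = lam * (pos_part c x * u x * ps x) + ((M x *v Dv x) \<bullet> Dv x) * ps x"
      by (simp add: algebra_simps)
    moreover have "0 \<le> ((M x *v Dv x) \<bullet> Dv x) * ps x"
      using Mpsd[OF x, of "Dv x"] psb(2)[OF x] by (simp add: inner_commute)
    ultimately show ?case by linarith
  qed
  have P2: "AE x in ?\<mu>. (A x *v Dv x) \<bullet> Dps x - 2 * ps x * ((M x *v Du0 x) \<bullet> Dv x) \<le> K2 x"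
    using uu0 AE_space
  proof eventually_elim
    case (elim x)
    then have x: "x \<in> \<Omega>" by simp
    have "0 \<le> v x" using elim by (simp add: v_def)
    then have D: "Fd (v x) \<le> - (Ff (v x) * Ff (v x))" by (rule Fd_neg)
    show ?case
      using pw2[where MM="M x" and a="Dv x" and g="grad \<phi> x" and du="Du0 x" and p="\<phi> x", OF Asym[OF x] \<theta> Aell[OF x] Ff_pos[of "v x"] D]
      by (simp add: K2_def Dps_def ps_def)
  qed
  have "lam * integral\<^sup>L ?\<mu> (\<lambda>x. pos_part c x * u x * ps x) = integral\<^sup>L ?\<mu> (\<lambda>x. lam * (pos_part c x * u x * ps x))"
    by simp
  also have "\<dots> \<le> integral\<^sup>L ?\<mu> (\<lambda>x. (R1 x - R0 x) * ps x - 2 * ps x * ((M x *v Du0 x) \<bullet> Dv x))"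
  proof (rule integral_mono_AE)
    show "integrable ?\<mu> (\<lambda>x. lam * (pos_part c x * u x * ps x))" using cups by auto
    show "integrable ?\<mu> (\<lambda>x. (R1 x - R0 x) * ps x - 2 * ps x * ((M x *v Du0 x) \<bullet> Dv x))"
      using R1p R0p MDvp by (auto simp: left_diff_distrib)
  qed (rule P1)
  also have "\<dots> = integral\<^sup>L ?\<mu> (\<lambda>x. (R1 x - R0 x) * ps x) - integral\<^sup>L ?\<mu> (\<lambda>x. 2 * ps x * ((M x *v Du0 x) \<bullet> Dv x))"
    using R1p R0p MDvp by (subst Bochner_Integration.integral_diff) (auto simp: left_diff_distrib)
  also have "\<dots> = integral\<^sup>L ?\<mu> (\<lambda>x. (A x *v Dv x) \<bullet> Dps x - 2 * ps x * ((M x *v Du0 x) \<bullet> Dv x))"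
    using ADvi MDvp IADv by simp
  also have "\<dots> \<le> integral\<^sup>L ?\<mu> K2"
    by (rule integral_mono_AE[OF _ K2i P2]) (use ADvi MDvp in auto)
  finally have fin: "lam * integral\<^sup>L ?\<mu> (\<lambda>x. pos_part c x * u x * ps x) \<le> integral\<^sup>L ?\<mu> K2" .
  show ?thesis using fin cups unfolding K2_def[abs_def] ps_def v_def by blast
qed


lemma lb:
  fixes P u u0 \<phi> :: real
  assumes P: "0 \<le> P" and uu: "u0 \<le> u" and Pu: "0 \<le> P * u0"
  shows "(1/2) * (\<phi> * \<phi>) * (P * min 1 (max u0 0)) \<le> P * u * (\<phi> * \<phi> * Ff (u - u0))"
proof (cases "P = 0")
  case True then show ?thesis by simp
next
  case False
  then have Pp: "P > 0" using P by simp
  then have u0: "0 \<le> u0" using Pu by (simp add: zero_le_mult_iff)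
  define v where "v = u - u0"
  have v: "0 \<le> v" using uu by (simp add: v_def)
  have G: "0 < Gf v" "Gf v \<le> 2 * v + 2" using Gf_pos Gf_upper[OF v] by auto
  have u: "u = v + u0" by (simp add: v_def)
  have "min 1 (max u0 0) / 2 \<le> u / (2 * v + 2)"
  proof (cases "u0 \<ge> 1")
    case True
    then have "min 1 (max u0 0) = 1" by simp
    moreover have "1 / 2 \<le> u / (2 * v + 2)" using True v u by (simp add: field_simps)
    ultimately show ?thesis by simp
  next
    case False
    then have m: "min 1 (max u0 0) = u0" using u0 by simp
    have "u0 * (v + 1) \<le> u" using False v u0 u by (simp add: algebra_simps mult_left_le_one_le)
    then show ?thesis unfolding m using v by (simp add: field_simps)
  qed
  also have "u / (2 * v + 2) \<le> u / Gf v"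
    using G u0 v u by (intro divide_left_mono) auto
  also have "u / Gf v = u * Ff v" by (simp add: Ff_def divide_inverse)
  finally have "min 1 (max u0 0) / 2 \<le> u * Ff v" .
  then have "(\<phi> * \<phi> * P) * (min 1 (max u0 0) / 2) \<le> (\<phi> * \<phi> * P) * (u * Ff v)"
    using P by (intro mult_left_mono) auto
  then show ?thesis by (simp add: v_def algebra_simps)
qed

lemma test_meas: "test_fn \<Omega> f \<Longrightarrow> \<Omega> \<in> sets lebesgue \<Longrightarrow> f \<in> borel_measurable (lebesgue_on \<Omega>)"
  using meas_cont[OF smooth_cont] unfolding test_fn_def by blast

lemma test_bnd: "test_fn \<Omega> f \<Longrightarrow> bounded \<Omega> \<Longrightarrow> \<exists>B. \<forall>x\<in>\<Omega>. \<bar>f x\<bar> \<le> B"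
  using bounded_on_closure[OF smooth_cont, of f \<Omega>] unfolding test_fn_def by auto

lemma choose_phi:
  fixes \<Omega> :: "(real^'n::finite) set" and c u0 :: "real^'n \<Rightarrow> real" and \<phi>0 :: "nat \<Rightarrow> real^'n \<Rightarrow> real"
  assumes \<Omega>o: "open \<Omega>" and \<Omega>b: "bounded \<Omega>"
    and cpi: "integrable (lebesgue_on \<Omega>) (pos_part c)"
    and u0m: "u0 \<in> borel_measurable (lebesgue_on \<Omega>)"
    and u0i: "integrable (lebesgue_on \<Omega>) (\<lambda>x. (u0 x)\<^sup>2)"
    and t0: "\<And>k. test_fn \<Omega> (\<phi>0 k)"
    and l0: "(\<lambda>k. integral\<^sup>L (lebesgue_on \<Omega>) (\<lambda>x. (\<phi>0 k x - u0 x)\<^sup>2)) \<longlonglongrightarrow> 0"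
    and cu0: "AE x in lebesgue_on \<Omega>. pos_part c x * u0 x \<ge> 0"
    and cu0nz: "\<not> (AE x in lebesgue_on \<Omega>. pos_part c x * u0 x = 0)"
  shows "\<exists>\<phi>. test_fn \<Omega> \<phi> \<and>
     integrable (lebesgue_on \<Omega>) (\<lambda>x. (1/2) * (\<phi> x * \<phi> x) * (pos_part c x * min 1 (max (u0 x) 0))) \<and>
     0 < integral\<^sup>L (lebesgue_on \<Omega>) (\<lambda>x. (1/2) * (\<phi> x * \<phi> x) * (pos_part c x * min 1 (max (u0 x) 0)))"
proof -
  let ?\<mu> = "lebesgue_on \<Omega>"
  define q where "q x = pos_part c x * min 1 (max (u0 x) 0)" for x
  have \<Omega>s: "\<Omega> \<in> sets lebesgue" using lmeasurable_open[OF \<Omega>b \<Omega>o] by (simp add: fmeasurableD)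
  have fin: "finite_measure ?\<mu>" by (rule finite_measure_lebesgue_on[OF lmeasurable_open[OF \<Omega>b \<Omega>o]])
  have ic: "integrable ?\<mu> (\<lambda>x. K)" for K :: real by (rule finite_measure.integrable_const[OF fin])
  have cpm [measurable]: "pos_part c \<in> borel_measurable ?\<mu>" using cpi by auto
  have [measurable]: "u0 \<in> borel_measurable ?\<mu>" by (rule u0m)
  have [measurable]: "q \<in> borel_measurable ?\<mu>" unfolding q_def[abs_def] by measurable
  have q0: "0 \<le> q x" "q x \<le> pos_part c x" for x
  proof -
    have a: "0 \<le> pos_part c x" by (simp add: pos_part_def)
    have b: "0 \<le> min 1 (max (u0 x) 0)" "min 1 (max (u0 x) 0) \<le> 1" by auto
    show "0 \<le> q x" using a b by (simp add: q_def)
    show "q x \<le> pos_part c x" unfolding q_def using mult_left_le_one_le[OF a b] by (simp add: mult.commute)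
  qed
  have sqle: "(f::real)^2 \<le> B^2" if "\<bar>f\<bar> \<le> B" for f B
    using that by (metis abs_ge_zero abs_le_square_iff abs_of_nonneg order_trans power2_abs)
  have Ii: "integrable ?\<mu> (\<lambda>x. (1/2) * (\<phi> x * \<phi> x) * q x)" if tf: "test_fn \<Omega> \<phi>" for \<phi>
  proof -
    obtain B where B: "\<forall>x\<in>\<Omega>. \<bar>\<phi> x\<bar> \<le> B" using test_bnd[OF tf \<Omega>b] by blast
    have [measurable]: "\<phi> \<in> borel_measurable ?\<mu>" by (rule test_meas[OF tf \<Omega>s])
    show ?thesis
    proof (rule intb[where g="\<lambda>x. B\<^sup>2 * pos_part c x"])
      show "integrable ?\<mu> (\<lambda>x. B\<^sup>2 * pos_part c x)" using cpi by auto
      show "(\<lambda>x. (1/2) * (\<phi> x * \<phi> x) * q x) \<in> borel_measurable ?\<mu>" by measurable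
      show "AE x in ?\<mu>. \<bar>(1/2) * (\<phi> x * \<phi> x) * q x\<bar> \<le> B\<^sup>2 * pos_part c x"
      proof (rule AE_on)
        fix x assume x: "x \<in> \<Omega>"
        have "(\<phi> x)\<^sup>2 \<le> B\<^sup>2" using sqle B x by auto
        then have "\<phi> x * \<phi> x * q x \<le> B\<^sup>2 * pos_part c x"
          using q0[of x] by (intro mult_mono) (auto simp: power2_eq_square)
        moreover have "0 \<le> \<phi> x * \<phi> x * q x" using q0[of x] by simp
        ultimately show "\<bar>(1/2) * (\<phi> x * \<phi> x) * q x\<bar> \<le> B\<^sup>2 * pos_part c x"
          by (simp add: abs_mult)
      qed
    qed
  qed
  have L2d: "integrable ?\<mu> (\<lambda>x. (\<phi>0 k x - u0 x)\<^sup>2)" for k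
  proof -
    obtain B where B: "\<forall>x\<in>\<Omega>. \<bar>\<phi>0 k x\<bar> \<le> B" using test_bnd[OF t0 \<Omega>b] by blast
    have [measurable]: "\<phi>0 k \<in> borel_measurable ?\<mu>" by (rule test_meas[OF t0 \<Omega>s])
    show ?thesis
    proof (rule intb[where g="\<lambda>x. 2*B^2 + 2*(u0 x)^2"])
      show "integrable ?\<mu> (\<lambda>x. 2*B^2 + 2*(u0 x)^2)" using ic u0i by auto
      show "(\<lambda>x. (\<phi>0 k x - u0 x)\<^sup>2) \<in> borel_measurable ?\<mu>" by measurable
      show "AE x in ?\<mu>. \<bar>(\<phi>0 k x - u0 x)\<^sup>2\<bar> \<le> 2*B^2 + 2*(u0 x)^2"
      proof (rule AE_on)
        fix x assume "x \<in> \<Omega>"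
        then have "(\<phi>0 k x)^2 \<le> B^2" using B sqle by auto
        moreover have "(\<phi>0 k x - u0 x)^2 \<le> 2*(\<phi>0 k x)^2 + 2*(u0 x)^2" using L2_norm_diff_sq[of "\<phi>0 k x" "u0 x"] by simp
        ultimately show "\<bar>(\<phi>0 k x - u0 x)\<^sup>2\<bar> \<le> 2*B^2 + 2*(u0 x)^2" by simp
      qed
    qed
  qed
  show ?thesis
  proof (rule ccontr)
    assume neg: "\<not> ?thesis"
    have z: "AE x in ?\<mu>. (1/2) * (\<phi>0 k x * \<phi>0 k x) * q x = 0" for k
    proof -
      have "\<not> 0 < integral\<^sup>L ?\<mu> (\<lambda>x. (1/2) * (\<phi>0 k x * \<phi>0 k x) * q x)"
        using neg t0[of k] Ii[OF t0[of k]] unfolding q_def by blast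
      moreover have "0 \<le> integral\<^sup>L ?\<mu> (\<lambda>x. (1/2) * (\<phi>0 k x * \<phi>0 k x) * q x)"
        using q0 by (intro integral_nonneg_AE) auto
      ultimately have "integral\<^sup>L ?\<mu> (\<lambda>x. (1/2) * (\<phi>0 k x * \<phi>0 k x) * q x) = 0" by simp
      then show ?thesis using integral_nonneg_eq_0_iff_AE[OF Ii[OF t0[of k]]] q0 by auto
    qed
    have zz: "AE x in ?\<mu>. \<forall>k. (1/2) * (\<phi>0 k x * \<phi>0 k x) * q x = 0"
      by (rule AE_all_countable[THEN iffD2]) (rule allI, rule z)
    obtain r where r: "strict_mono r" "AE x in ?\<mu>. (\<lambda>k. \<phi>0 (r k) x) \<longlonglongrightarrow> u0 x"
      using AE_subseq_L2[of ?\<mu> \<phi>0 u0] L2d l0 by blast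
    have "AE x in ?\<mu>. pos_part c x * u0 x = 0"
      using zz r(2) cu0
    proof eventually_elim
      case (elim x)
      have "(\<lambda>k. (1/2) * (\<phi>0 (r k) x * \<phi>0 (r k) x) * q x) \<longlonglongrightarrow> (1/2) * (u0 x * u0 x) * q x"
        by (intro tendsto_intros elim)
      moreover have "(\<lambda>k. (1/2) * (\<phi>0 (r k) x * \<phi>0 (r k) x) * q x) = (\<lambda>k. 0)" using elim by auto
      ultimately have "(1/2) * (u0 x * u0 x) * q x = 0" using LIMSEQ_unique by fastforce
      then have "u0 x = 0 \<or> q x = 0" by simp
      then show ?case
      proof
        assume "q x = 0"
        then have "pos_part c x = 0 \<or> min 1 (max (u0 x) 0) = 0" by (simp add: q_def)
        then show ?thesis
        proof
          assume "min 1 (max (u0 x) 0) = 0"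
          then have "u0 x \<le> 0" by (simp add: min_def max_def split: if_splits)
          moreover have "0 \<le> pos_part c x" by (simp add: pos_part_def)
          ultimately have "pos_part c x * u0 x \<le> 0" by (simp add: mult_nonneg_nonpos)
          then show ?thesis using elim by linarith
        qed simp
      qed simp
    qed
    then show False using cu0nz by simp
  qed
qed

theorem lemma4p2:
  fixes \<Omega> :: "(real^'n) set"
    and A M :: "real^'n \<Rightarrow> real^'n^'n"
    and c h u0 :: "real^'n \<Rightarrow> real"
    and \<theta> \<mu>1 \<mu>2 p :: real
  assumes dim: "CARD('n) \<ge> 3"
    and dom: "open \<Omega>" "connected \<Omega>" "bounded \<Omega>" "\<Omega> \<noteq> {}"
    and bdry: "C1_dini_boundary \<Omega>"
    and A_sym: "\<And>x. x \<in> closure \<Omega> \<Longrightarrow> sym_matrix (A x)"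
    and A_dini: "\<And>i j. dini_continuous_on (closure \<Omega>) (\<lambda>x. A x $ i $ j)"
    and A_ell: "\<theta> > 0" "\<And>x \<xi>. x \<in> \<Omega> \<Longrightarrow>
        \<theta> * (norm \<xi>)\<^sup>2 \<le> \<xi> \<bullet> (A x *v \<xi>) \<and> \<xi> \<bullet> (A x *v \<xi>) \<le> (1 / \<theta>) * (norm \<xi>)\<^sup>2"
    and M_meas: "\<And>i j. (\<lambda>x. M x $ i $ j) \<in> borel_measurable (lebesgue_on \<Omega>)"
    and M_sym: "\<And>x. x \<in> \<Omega> \<Longrightarrow> sym_matrix (M x)"
    and M_bds: "0 < \<mu>1" "\<And>x \<xi>. x \<in> \<Omega> \<Longrightarrow>
        \<mu>1 * (norm \<xi>)\<^sup>2 \<le> \<xi> \<bullet> (M x *v \<xi>) \<and> \<xi> \<bullet> (M x *v \<xi>) \<le> \<mu>2 * (norm \<xi>)\<^sup>2"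
    and p: "p > real CARD('n)"
    and c_Lp: "Lp p \<Omega> c" and h_Lp: "Lp p \<Omega> h"
    and Acp: "hyp_Ac_plus \<Omega> c"
    and cminus: "AE x in lebesgue_on \<Omega>. neg_part c x = 0"
    and u0_sol: "is_solution \<Omega> A M c h 0 u0"
    and cu0_nonneg: "AE x in lebesgue_on \<Omega>. pos_part c x * u0 x \<ge> 0"
    and cu0_nonzero: "\<not> (AE x in lebesgue_on \<Omega>. pos_part c x * u0 x = 0)"
  shows "\<exists>lambar>0. \<forall>lam\<ge>lambar. \<not> (\<exists>u. is_solution \<Omega> A M c h lam u
                                    \<and> (AE x in lebesgue_on \<Omega>. u x \<ge> u0 x))"
proof -
  let ?\<mu> = "lebesgue_on \<Omega>"
  have \<Omega>o: "open \<Omega>" and \<Omega>b: "bounded \<Omega>" using dom by auto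
  have \<Omega>s: "\<Omega> \<in> sets lebesgue" using lmeasurable_open[OF \<Omega>b \<Omega>o] by (simp add: fmeasurableD)
  have fin: "finite_measure ?\<mu>" by (rule finite_measure_lebesgue_on[OF lmeasurable_open[OF \<Omega>b \<Omega>o]])
  have ic: "integrable ?\<mu> (\<lambda>x. K)" for K :: real by (rule finite_measure.integrable_const[OF fin])
  have p1: "1 \<le> p" using p dim by linarith
  have absle: "\<bar>t\<bar> \<le> 1 + \<bar>t\<bar> powr p" for t :: real
  proof (cases "\<bar>t\<bar> \<le> 1")
    case True then show ?thesis by (smt (verit) powr_ge_zero)
  next
    case False
    then have "\<bar>t\<bar> powr 1 \<le> \<bar>t\<bar> powr p" using p1 by (intro powr_mono) auto
    then show ?thesis using False by (smt (verit) powr_one_gt_zero_iff)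
  qed
  have Lpi: "integrable ?\<mu> f" if "Lp p \<Omega> f" for f
  proof (rule intb[where g="\<lambda>x. 1 + \<bar>f x\<bar> powr p"])
    show "integrable ?\<mu> (\<lambda>x. 1 + \<bar>f x\<bar> powr p)" using that ic unfolding Lp_def by auto
    show "f \<in> borel_measurable ?\<mu>" using that unfolding Lp_def by auto
    show "AE x in ?\<mu>. \<bar>f x\<bar> \<le> 1 + \<bar>f x\<bar> powr p" using absle by auto
  qed
  have cm [measurable]: "c \<in> borel_measurable ?\<mu>" using c_Lp unfolding Lp_def by auto
  have ci: "integrable ?\<mu> c" by (rule Lpi[OF c_Lp])
  have hi: "integrable ?\<mu> h" by (rule Lpi[OF h_Lp])
  have cpi: "integrable ?\<mu> (pos_part c)"
  proof (rule intb[where g="\<lambda>x. \<bar>c x\<bar>"])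
    show "integrable ?\<mu> (\<lambda>x. \<bar>c x\<bar>)" using ci by auto
    show "pos_part c \<in> borel_measurable ?\<mu>" unfolding pos_part_def[abs_def] by measurable
    show "AE x in ?\<mu>. \<bar>pos_part c x\<bar> \<le> \<bar>c x\<bar>" by (auto simp: pos_part_def)
  qed
  have Asym: "transpose (A x) = A x" if "x \<in> \<Omega>" for x
    using A_sym[of x] that closure_subset unfolding sym_matrix_def by blast
  have Aell': "\<theta> * (norm \<xi>)\<^sup>2 \<le> \<xi> \<bullet> (A x *v \<xi>)" if "x \<in> \<Omega>" for x \<xi> using A_ell(2)[OF that] by blast
  have Abd: "norm (A x *v \<xi>) \<le> (1/\<theta>) * norm \<xi>" if x: "x \<in> \<Omega>" for x \<xi>
  proof (rule sym_psd_bound[OF Asym[OF x]])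
    show "0 \<le> \<zeta> \<bullet> (A x *v \<zeta>)" for \<zeta> using Aell'[OF x, of \<zeta>] A_ell(1) by (smt (verit) mult_nonneg_nonneg zero_le_power2)
    show "\<zeta> \<bullet> (A x *v \<zeta>) \<le> 1 / \<theta> * (norm \<zeta>)\<^sup>2" for \<zeta> using A_ell(2)[OF x, of \<zeta>] by simp
  qed
  have Am: "(\<lambda>x. A x $ i $ j) \<in> borel_measurable ?\<mu>" for i j
  proof -
    have "continuous_on (closure \<Omega>) (\<lambda>x. A x $ i $ j)" using A_dini[of i j] unfolding dini_continuous_on_def by blast
    then have "continuous_on \<Omega> (\<lambda>x. A x $ i $ j)" using closure_subset continuous_on_subset by blast
    then show ?thesis by (rule continuous_imp_measurable_on_sets_lebesgue[OF _ \<Omega>s])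
  qed
  have Msym: "transpose (M x) = M x" if "x \<in> \<Omega>" for x using M_sym[OF that] unfolding sym_matrix_def .
  have Mpsd: "0 \<le> \<xi> \<bullet> (M x *v \<xi>)" if "x \<in> \<Omega>" for x \<xi>
    using M_bds(2)[OF that, of \<xi>] M_bds(1) by (smt (verit) mult_nonneg_nonneg zero_le_power2)
  have Mbd: "norm (M x *v \<xi>) \<le> \<mu>2 * norm \<xi>" if x: "x \<in> \<Omega>" for x \<xi>
    by (rule sym_psd_bound[OF Msym[OF x] Mpsd[OF x]]) (use M_bds(2)[OF x] in blast)
  obtain Du0 where Li0: "Linfty \<Omega> u0" and H0: "H01 \<Omega> u0 Du0"
    and E0: "\<And>\<psi>. test_fn \<Omega> \<psi> \<Longrightarrow> integral\<^sup>L ?\<mu> (\<lambda>x. (A x *v Du0 x) \<bullet> grad \<psi> x)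
         = integral\<^sup>L ?\<mu> (\<lambda>x. (c_lam 0 c x * u0 x + (M x *v Du0 x) \<bullet> Du0 x + h x) * \<psi> x)"
    using u0_sol unfolding is_solution_def by blast
  obtain C0 where u0m: "u0 \<in> borel_measurable ?\<mu>" and u0b: "AE x in ?\<mu>. \<bar>u0 x\<bar> \<le> C0"
    using Li0 unfolding Linfty_def by blast
  obtain \<phi>0 where Du0m: "Du0 \<in> borel_measurable ?\<mu>" and u0i: "integrable ?\<mu> (\<lambda>x. (u0 x)\<^sup>2)"
    and Du0i: "integrable ?\<mu> (\<lambda>x. (norm (Du0 x))\<^sup>2)" and t0: "\<And>k. test_fn \<Omega> (\<phi>0 k)"
    and l0: "(\<lambda>k. integral\<^sup>L ?\<mu> (\<lambda>x. (\<phi>0 k x - u0 x)\<^sup>2)) \<longlonglongrightarrow> 0"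
    and g0: "(\<lambda>k. integral\<^sup>L ?\<mu> (\<lambda>x. (norm (grad (\<phi>0 k) x - Du0 x))\<^sup>2)) \<longlonglongrightarrow> 0"
    using H0 unfolding H01_def by blast
  obtain \<phi> where \<phi>t: "test_fn \<Omega> \<phi>"
    and Ii: "integrable ?\<mu> (\<lambda>x. (1/2) * (\<phi> x * \<phi> x) * (pos_part c x * min 1 (max (u0 x) 0)))"
    and Ipos: "0 < integral\<^sup>L ?\<mu> (\<lambda>x. (1/2) * (\<phi> x * \<phi> x) * (pos_part c x * min 1 (max (u0 x) 0)))"
    using choose_phi[OF \<Omega>o \<Omega>b cpi u0m u0i t0 l0 cu0_nonneg cu0_nonzero] by blast
  define I where "I = integral\<^sup>L ?\<mu> (\<lambda>x. (1/2) * (\<phi> x * \<phi> x) * (pos_part c x * min 1 (max (u0 x) 0)))"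
  define C where "C = integral\<^sup>L ?\<mu> (\<lambda>x. (2 * norm (A x *v grad \<phi> x) + 2 * \<bar>\<phi> x\<bar> * norm (M x *v Du0 x))\<^sup>2 / (4 * \<theta>))"
  have C0': "0 \<le> C" unfolding C_def using A_ell(1) by (intro integral_nonneg_AE) auto
  have I0: "0 < I" using Ipos by (simp add: I_def)
  define lambar where "lambar = C / I + 1"
  have "0 \<le> C / I" using C0' I0 by simp
  then have lb0: "0 < lambar" by (simp add: lambar_def)
  have "\<forall>lam\<ge>lambar. \<not> (\<exists>u. is_solution \<Omega> A M c h lam u \<and> (AE x in ?\<mu>. u x \<ge> u0 x))"
  proof (intro allI impI notI)
    fix lam assume lam: "lambar \<le> lam" and "\<exists>u. is_solution \<Omega> A M c h lam u \<and> (AE x in ?\<mu>. u x \<ge> u0 x)"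
    then obtain u where us: "is_solution \<Omega> A M c h lam u" and uu0: "AE x in ?\<mu>. u0 x \<le> u x" by blast
    obtain Du where Li1: "Linfty \<Omega> u" and H1: "H01 \<Omega> u Du"
      and E1: "\<And>\<psi>. test_fn \<Omega> \<psi> \<Longrightarrow> integral\<^sup>L ?\<mu> (\<lambda>x. (A x *v Du x) \<bullet> grad \<psi> x)
           = integral\<^sup>L ?\<mu> (\<lambda>x. (c_lam lam c x * u x + (M x *v Du x) \<bullet> Du x + h x) * \<psi> x)"
      using us unfolding is_solution_def by blast
    obtain C1 where um: "u \<in> borel_measurable ?\<mu>" and ub: "AE x in ?\<mu>. \<bar>u x\<bar> \<le> C1"
      using Li1 unfolding Linfty_def by blast
    obtain \<phi>1 where Dum: "Du \<in> borel_measurable ?\<mu>" and ui: "integrable ?\<mu> (\<lambda>x. (u x)\<^sup>2)"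
      and Dui: "integrable ?\<mu> (\<lambda>x. (norm (Du x))\<^sup>2)" and t1: "\<And>k. test_fn \<Omega> (\<phi>1 k)"
      and l1: "(\<lambda>k. integral\<^sup>L ?\<mu> (\<lambda>x. (\<phi>1 k x - u x)\<^sup>2)) \<longlonglongrightarrow> 0"
      and g1: "(\<lambda>k. integral\<^sup>L ?\<mu> (\<lambda>x. (norm (grad (\<phi>1 k) x - Du x))\<^sup>2)) \<longlonglongrightarrow> 0"
      using H1 unfolding H01_def by blast
    have K: "integrable ?\<mu> (\<lambda>x. pos_part c x * u x * (\<phi> x * \<phi> x * Ff (u x - u0 x))) \<and>
       lam * integral\<^sup>L ?\<mu> (\<lambda>x. pos_part c x * u x * (\<phi> x * \<phi> x * Ff (u x - u0 x))) \<le> C"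
      unfolding C_def
      by (rule key[OF \<Omega>o \<Omega>b Asym A_ell(1) Aell' Abd Am Msym Mpsd Mbd M_meas cm cpi cminus hi
          u0m u0b u0i Du0m Du0i t0 l0 g0 um ub ui Dum Dui t1 l1 g1 E0 E1 \<phi>t uu0])
    define J where "J = integral\<^sup>L ?\<mu> (\<lambda>x. pos_part c x * u x * (\<phi> x * \<phi> x * Ff (u x - u0 x)))"
    have IJ: "I \<le> J" unfolding I_def J_def
    proof (rule integral_mono_AE[OF Ii conjunct1[OF K]])
      show "AE x in ?\<mu>. (1/2) * (\<phi> x * \<phi> x) * (pos_part c x * min 1 (max (u0 x) 0))
          \<le> pos_part c x * u x * (\<phi> x * \<phi> x * Ff (u x - u0 x))"
        using uu0 cu0_nonneg by eventually_elim (rule lb, auto simp: pos_part_def)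
    qed
    have lJ: "lam * J \<le> C" using K by (simp add: J_def)
    have lampos: "0 < lam" using lam lb0 by linarith
    have "lambar * I \<le> lam * J" using lam IJ I0 lb0 by (intro mult_mono) auto
    moreover have "lambar * I = C + I" using I0 by (simp add: lambar_def field_simps)
    ultimately show False using lJ I0 by linarith
  qed
  then show ?thesis using lb0 by blast
qed


end
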